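(* Let $\mathcal L$ be a non-trivial geometric lattice. Every modular diagram $(\mathcal E,\iota,J)$ of $\mathcal L$ with $J$ non-empty and $\iota^{-1}((\bigvee J)\wedge F_\iota)=\hat0$ is zero in $\mathcal{MD}(\mathcal L)$. Consequently the grading-$\hat0$ part $\mathcal{MD}(\mathcal L,\hat0)$ is one-dimensional, concentrated in degree $0$, and spanned by the class of the empty diagram $(\mathcal L,\mathrm{id}_{\mathcal L},\emptyset)$.
   Context: Geometric lattices. A geometric lattice is a finite lattice $\mathcal L$ (bottom $\hat0$, top $\hat1$, join $\vee$, meet $\wedge$) which is ranked (all maximal chains from $\hat0$ to a given element $F$ have the same length $\mathrm{rk}(F)$), atomic (every element is a join of atoms, i.e. rank-one elements) and semimodular ($\mathrm{rk}(F_1\wedge F_2)+\mathrm{rk}(F_1\vee F_2)\le\mathrm{rk}(F_1)+\mathrm{rk}(F_2)$). Elements are called flats, $\mathrm{At}(\mathcal L)$ denotes the set of atoms, and $\mathcal L$ is non-trivial if it has at least two elements. For a finite family $J$ of atoms, $\bigvee J$ is its join ($\bigvee\emptyset=\hat0$). Every interval $[F_1,F_2]$ is a geometric lattice, and products of geometric lattices are geometric lattices. A flat $F$ is modular if $\mathrm{rk}(F\wedge F')+\mathrm{rk}(F\vee F')=\mathrm{rk}(F)+\mathrm{rk}(F')$ for every flat $F'$. An embedding $\varphi:\mathcal L_1\to\mathcal L_2$ of geometric lattices is an injective order-preserving map preserving joins and sending atoms to atoms. Modular diagrams. Let $\mathcal L$ be a non-trivial geometric lattice. A modular extension of $\mathcal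 L$ is a pair $(\mathcal E,\iota)$ where $\mathcal E$ is a geometric lattice and $\iota:\mathcal L\to\mathcal E$ is an embedding whose image is an interval $[\hat0,F_\iota]$ with $F_\iota$ a modular flat of $\mathcal E$. A modular diagram of $\mathcal L$ is a triple $\Gamma=(\mathcal E,\iota,J)$ with $(\mathcal E,\iota)$ a modular extension and $J=(H_1,\dots,H_n)$ a finite word in the alphabet $\mathrm{At}(\mathcal E)$; its degree is $\deg\Gamma=n-2\big(\mathrm{rk}\bigvee J-\mathrm{rk}((\bigvee J)\wedge F_\iota)\big)$. $\mathcal{MD}(\mathcal L)$ is the $\mathbb Z$-graded $\mathbb Q$-vector space spanned by all modular diagrams, quotiented by the relations: (R1) $(\mathcal E,\iota,J)\sim-(\mathcal E,\iota,J')$ if $J'$ is obtained from $J$ by transposing two letters; (R2) $(\mathcal E,\iota,J)\sim(\mathcal E',\iota',J')$ if there is an embedding $\varphi:\mathcal E\to\mathcal E'$ with $\mathrm{rk}(\mathcal E)=\mathrm{rk}(\mathcal E')$, $\iota'=\varphi\circ\iota$ and $J'=\varphi(J)$ letterwise; (R3) $(\mathcal E,\iota,J)\sim0$ if $F_\iota\vee\bigvee J<\hat1_{\mathcal E}$; (R4) $(\mathcal E,\iota,J)\sim0$ if $\mathcal E\cong\mathcal E_1\times\mathcal E_2$ with $\mathcal E_1,\mathcal E_2$ non-trivial and $F_\iota\in\mathcal E_1\times\{\hat0\}$; (R5) $(\mathcal E,\iota,J)\sim0$ if there is a modular flat $F\ge F_\iota$ of $\mathcal E$ such that exactly two letters of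 $J$ are not below $F$. The grading-$\hat0$ part $\mathcal{MD}(\mathcal L,\hat0)$ is the span of classes of modular diagrams $(\mathcal E,\iota,J)$ with $\iota^{-1}((\bigvee J)\wedge F_\iota)=\hat0$. *)

theory Defs
  imports Complex_Main "HOL-Library.Function_Algebras"
begin

type_synonym 'b lat = "'b set \<times> ('b \<Rightarrow> 'b \<Rightarrow> bool)"

definition llt :: "'b lat \<Rightarrow> 'b \<Rightarrow> 'b \<Rightarrow> bool" where
  "llt L x y \<longleftrightarrow> snd L x y \<and> x \<noteq> y"

definition is_finite_lattice :: "'b lat \<Rightarrow> bool" where
  "is_finite_lattice L \<longleftrightarrow> finite (fst L) \<and> fst L \<noteq> {} \<and>
     (\<forall>x\<in>fst L. snd L x x) \<and>
     (\<forall>x\<in>fst L. \<forall>y\<in>fst L. snd L x y \<and> snd L y x \<longrightarrow> x = y) \<and>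
     (\<forall>x\<in>fst L. \<forall>y\<in>fst L. \<forall>z\<in>fst L. snd L x y \<and> snd L y z \<longrightarrow> snd L x z) \<and>
     (\<forall>x\<in>fst L. \<forall>y\<in>fst L. \<exists>z\<in>fst L. snd L x z \<and> snd L y z \<and>
        (\<forall>w\<in>fst L. snd L x w \<and> snd L y w \<longrightarrow> snd L z w)) \<and>
     (\<forall>x\<in>fst L. \<forall>y\<in>fst L. \<exists>z\<in>fst L. snd L z x \<and> snd L z y \<and>
        (\<forall>w\<in>fst L. snd L w x \<and> snd L w y \<longrightarrow> snd L w z))"

definition ljoin :: "'b lat \<Rightarrow> 'b \<Rightarrow> 'b \<Rightarrow> 'b" where
  "ljoin L x y = (THE z. z \<in> fst L \<and> snd L x z \<and> snd L y z \<and>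
        (\<forall>w\<in>fst L. snd L x w \<and> snd L y w \<longrightarrow> snd L z w))"

definition lmeet :: "'b lat \<Rightarrow> 'b \<Rightarrow> 'b \<Rightarrow> 'b" where
  "lmeet L x y = (THE z. z \<in> fst L \<and> snd L z x \<and> snd L z y \<and>
        (\<forall>w\<in>fst L. snd L w x \<and> snd L w y \<longrightarrow> snd L w z))"

definition lbot :: "'b lat \<Rightarrow> 'b" where
  "lbot L = (THE z. z \<in> fst L \<and> (\<forall>x\<in>fst L. snd L z x))"

definition ltop :: "'b lat \<Rightarrow> 'b" where
  "ltop L = (THE z. z \<in> fst L \<and> (\<forall>x\<in>fst L. snd L x z))"

definition joinL :: "'b lat \<Rightarrow> 'b list \<Rightarrow> 'b" where
  "joinL L J = foldr (ljoin L) J (lbot L)"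

definition covers :: "'b lat \<Rightarrow> 'b \<Rightarrow> 'b \<Rightarrow> bool" where
  "covers L x y \<longleftrightarrow> x \<in> fst L \<and> y \<in> fst L \<and> llt L x y \<and>
      \<not> (\<exists>z\<in>fst L. llt L x z \<and> llt L z y)"

text \<open>A maximal chain from the bottom to F, listed as bottom = c0 < c1 < ... < ck = F
  with consecutive elements in covering relation; its length is k.\<close>
definition max_chain :: "'b lat \<Rightarrow> 'b \<Rightarrow> 'b list \<Rightarrow> bool" where
  "max_chain L F c \<longleftrightarrow> c \<noteq> [] \<and> hd c = lbot L \<and> last c = F \<and>
      (\<forall>i. Suc i < length c \<longrightarrow> covers L (c ! i) (c ! Suc i))"

definition ranked :: "'b lat \<Rightarrow> bool" where
  "ranked L \<longleftrightarrow> (\<forall>F\<in>fst L. \<forall>c c'. max_chain L F c \<and> max_chain L F c' \<longrightarrow> length c = length c')"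

definition rk :: "'b lat \<Rightarrow> 'b \<Rightarrow> nat" where
  "rk L F = (SOME n. \<exists>c. max_chain L F c \<and> length c = Suc n)"

definition atoms :: "'b lat \<Rightarrow> 'b set" where
  "atoms L = {a \<in> fst L. rk L a = 1}"

definition atomic :: "'b lat \<Rightarrow> bool" where
  "atomic L \<longleftrightarrow> (\<forall>F\<in>fst L. \<exists>J. set J \<subseteq> atoms L \<and> F = joinL L J)"

definition semimodular :: "'b lat \<Rightarrow> bool" where
  "semimodular L \<longleftrightarrow> (\<forall>x\<in>fst L. \<forall>y\<in>fst L.
      rk L (lmeet L x y) + rk L (ljoin L x y) \<le> rk L x + rk L y)"

definition geometric_lattice :: "'b lat \<Rightarrow> bool" where
  "geometric_lattice L \<longleftrightarrow> is_finite_lattice L \<and> ranked L \<and> atomic L \<and> semimodular L"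

definition nontrivial_lattice :: "'b lat \<Rightarrow> bool" where
  "nontrivial_lattice L \<longleftrightarrow> 2 \<le> card (fst L)"

definition modular_flat :: "'b lat \<Rightarrow> 'b \<Rightarrow> bool" where
  "modular_flat L F \<longleftrightarrow> F \<in> fst L \<and> (\<forall>F'\<in>fst L.
      rk L (lmeet L F F') + rk L (ljoin L F F') = rk L F + rk L F')"

definition lattice_embedding :: "'b lat \<Rightarrow> 'c lat \<Rightarrow> ('b \<Rightarrow> 'c) \<Rightarrow> bool" where
  "lattice_embedding L1 L2 \<phi> \<longleftrightarrow> inj_on \<phi> (fst L1) \<and> \<phi> ` fst L1 \<subseteq> fst L2 \<and>
      (\<forall>x\<in>fst L1. \<forall>y\<in>fst L1. snd L1 x y \<longrightarrow> snd L2 (\<phi> x) (\<phi> y)) \<and>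
      (\<forall>x\<in>fst L1. \<forall>y\<in>fst L1. \<phi> (ljoin L1 x y) = ljoin L2 (\<phi> x) (\<phi> y)) \<and>
      \<phi> ` atoms L1 \<subseteq> atoms L2"

definition lattice_iso :: "'b lat \<Rightarrow> 'c lat \<Rightarrow> ('b \<Rightarrow> 'c) \<Rightarrow> bool" where
  "lattice_iso L1 L2 \<psi> \<longleftrightarrow> bij_betw \<psi> (fst L1) (fst L2) \<and>
      (\<forall>x\<in>fst L1. \<forall>y\<in>fst L1. snd L1 x y \<longleftrightarrow> snd L2 (\<psi> x) (\<psi> y))"

definition prod_lattice :: "'b lat \<Rightarrow> 'c lat \<Rightarrow> ('b \<times> 'c) lat" where
  "prod_lattice L1 L2 = (fst L1 \<times> fst L2,
      \<lambda>(x1, x2) (y1, y2). snd L1 x1 y1 \<and> snd L2 x2 y2)"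

text \<open>Ambient type of extensions: 'a + nat (infinite, so every finite lattice has a copy).\<close>

definition modular_extension :: "'a lat \<Rightarrow> ('a + nat) lat \<Rightarrow> ('a \<Rightarrow> 'a + nat) \<Rightarrow> bool" where
  "modular_extension L E \<iota> \<longleftrightarrow> geometric_lattice E \<and> lattice_embedding L E \<iota> \<and>
      (\<exists>F\<in>fst E. modular_flat E F \<and>
         \<iota> ` fst L = {x \<in> fst E. snd E (lbot E) x \<and> snd E x F})"

text \<open>The flat F_iota (the top of the interval image), i.e. the image of the top of L.\<close>
definition Fiota :: "'a lat \<Rightarrow> ('a \<Rightarrow> 'a + nat) \<Rightarrow> 'a + nat" where
  "Fiota L \<iota> = \<iota> (ltop L)"

type_synonym 'a diagram = "('a + nat) lat \<times> ('a \<Rightarrow> 'a + nat) \<times> ('a + nat) list"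

definition modular_diagram :: "'a lat \<Rightarrow> 'a diagram \<Rightarrow> bool" where
  "modular_diagram L D \<longleftrightarrow> (case D of (E, \<iota>, J) \<Rightarrow>
      modular_extension L E \<iota> \<and> set J \<subseteq> atoms E)"

definition diagram_degree :: "'a lat \<Rightarrow> 'a diagram \<Rightarrow> int" where
  "diagram_degree L D = (case D of (E, \<iota>, J) \<Rightarrow>
      int (length J) - 2 * (int (rk E (joinL E J)) - int (rk E (lmeet E (joinL E J) (Fiota L \<iota>)))))"

definition grading_zero :: "'a lat \<Rightarrow> 'a diagram \<Rightarrow> bool" where
  "grading_zero L D \<longleftrightarrow> (case D of (E, \<iota>, J) \<Rightarrow>
      the_inv_into (fst L) \<iota> (lmeet E (joinL E J) (Fiota L \<iota>)) = lbot L)"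

definition empty_diagram :: "'a lat \<Rightarrow> 'a diagram" where
  "empty_diagram L = ((Inl ` fst L,
      \<lambda>x y. \<exists>a b. x = Inl a \<and> y = Inl b \<and> snd L a b), Inl, [])"

definition rel_R1 :: "'a lat \<Rightarrow> 'a diagram \<Rightarrow> 'a diagram \<Rightarrow> bool" where
  "rel_R1 L D D' \<longleftrightarrow> modular_diagram L D \<and> modular_diagram L D' \<and>
      (\<exists>E \<iota> J i j. D = (E, \<iota>, J) \<and> i < length J \<and> j < length J \<and> i \<noteq> j \<and>
         D' = (E, \<iota>, J[i := J ! j, j := J ! i]))"

definition rel_R2 :: "'a lat \<Rightarrow> 'a diagram \<Rightarrow> 'a diagram \<Rightarrow> bool" where
  "rel_R2 L D D' \<longleftrightarrow> modular_diagram L D \<and> modular_diagram L D' \<and>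
      (\<exists>E \<iota> J E' \<iota>' J' \<phi>. D = (E, \<iota>, J) \<and> D' = (E', \<iota>', J') \<and>
         lattice_embedding E E' \<phi> \<and> rk E (ltop E) = rk E' (ltop E') \<and>
         (\<forall>x\<in>fst L. \<iota>' x = \<phi> (\<iota> x)) \<and> J' = map \<phi> J)"

definition zero_R3 :: "'a lat \<Rightarrow> 'a diagram \<Rightarrow> bool" where
  "zero_R3 L D \<longleftrightarrow> modular_diagram L D \<and> (case D of (E, \<iota>, J) \<Rightarrow>
      llt E (ljoin E (Fiota L \<iota>) (joinL E J)) (ltop E))"

definition zero_R4 :: "'a lat \<Rightarrow> 'a diagram \<Rightarrow> bool" where
  "zero_R4 L D \<longleftrightarrow> modular_diagram L D \<and> (case D of (E, \<iota>, J) \<Rightarrow>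
      (\<exists>(E1 :: ('a + nat) lat) (E2 :: ('a + nat) lat) \<psi>.
         geometric_lattice E1 \<and> geometric_lattice E2 \<and>
         nontrivial_lattice E1 \<and> nontrivial_lattice E2 \<and>
         lattice_iso E (prod_lattice E1 E2) \<psi> \<and>
         \<psi> (Fiota L \<iota>) \<in> fst E1 \<times> {lbot E2}))"

definition zero_R5 :: "'a lat \<Rightarrow> 'a diagram \<Rightarrow> bool" where
  "zero_R5 L D \<longleftrightarrow> modular_diagram L D \<and> (case D of (E, \<iota>, J) \<Rightarrow>
      (\<exists>F\<in>fst E. modular_flat E F \<and> snd E (Fiota L \<iota>) F \<and>
         card {i. i < length J \<and> \<not> snd E (J ! i) F} = 2))"

definition md_basis :: "'a diagram \<Rightarrow> ('a diagram \<Rightarrow> rat)" where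
  "md_basis D = (\<lambda>X. if X = D then 1 else 0)"

definition md_relations :: "'a lat \<Rightarrow> ('a diagram \<Rightarrow> rat) set" where
  "md_relations L =
     {md_basis D + md_basis D' | D D'. rel_R1 L D D'} \<union>
     {md_basis D - md_basis D' | D D'. rel_R2 L D D'} \<union>
     {md_basis D | D. zero_R3 L D \<or> zero_R4 L D \<or> zero_R5 L D}"

text \<open>The subspace spanned by the relations; a diagram is zero in MD(L) iff its
  basis vector lies in it.\<close>
definition md_relspan :: "'a lat \<Rightarrow> ('a diagram \<Rightarrow> rat) set" where
  "md_relspan L = module.span (\<lambda>(c::rat) (f :: 'a diagram \<Rightarrow> rat) X. c * f X) (md_relations L)"

end

theory Submission
  imports Defs
begin


locale FL = fixes L :: "'b lat" assumes FL: "is_finite_lattice L"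
begin

lemma parts1: "finite (fst L)"
  using FL unfolding is_finite_lattice_def apply - by (elim conjE) assumption
lemma parts2: "fst L \<noteq> {}"
  using FL unfolding is_finite_lattice_def apply - by (elim conjE) assumption
lemma parts3: "\<forall>x\<in>fst L. snd L x x"
  using FL unfolding is_finite_lattice_def apply - by (elim conjE) assumption
lemma parts4: "\<forall>x\<in>fst L. \<forall>y\<in>fst L. snd L x y \<and> snd L y x \<longrightarrow> x = y"
  using FL unfolding is_finite_lattice_def apply - by (elim conjE) assumption
lemma parts5: "\<forall>x\<in>fst L. \<forall>y\<in>fst L. \<forall>z\<in>fst L. snd L x y \<and> snd L y z \<longrightarrow> snd L x z"
  using FL unfolding is_finite_lattice_def apply - by (elim conjE) assumption
lemma parts6: "\<forall>x\<in>fst L. \<forall>y\<in>fst L. \<exists>z\<in>fst L. snd L x z \<and> snd L y z \<and>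
        (\<forall>w\<in>fst L. snd L x w \<and> snd L y w \<longrightarrow> snd L z w)"
  using FL unfolding is_finite_lattice_def apply - by (elim conjE) assumption
lemma parts7: "\<forall>x\<in>fst L. \<forall>y\<in>fst L. \<exists>z\<in>fst L. snd L z x \<and> snd L z y \<and>
        (\<forall>w\<in>fst L. snd L w x \<and> snd L w y \<longrightarrow> snd L w z)"
  using FL unfolding is_finite_lattice_def apply - by (elim conjE) assumption
lemmas parts = parts1 parts2 parts3 parts4 parts5 parts6 parts7

lemma fin: "finite (fst L)" by (rule parts)
lemma ne: "fst L \<noteq> {}" by (rule parts)
lemma refl: "x \<in> fst L \<Longrightarrow> snd L x x" using parts(3) by blast
lemma antisym: "x \<in> fst L \<Longrightarrow> y \<in> fst L \<Longrightarrow> snd L x y \<Longrightarrow> snd L y x \<Longrightarrow> x = y"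
  using parts(4) by blast
lemma trans: "x \<in> fst L \<Longrightarrow> y \<in> fst L \<Longrightarrow> z \<in> fst L \<Longrightarrow> snd L x y \<Longrightarrow> snd L y z \<Longrightarrow> snd L x z"
  using parts(5) by blast
lemma join_ex: "x \<in> fst L \<Longrightarrow> y \<in> fst L \<Longrightarrow> \<exists>z\<in>fst L. snd L x z \<and> snd L y z \<and>
        (\<forall>w\<in>fst L. snd L x w \<and> snd L y w \<longrightarrow> snd L z w)"
  using parts(6) by blast
lemma meet_ex: "x \<in> fst L \<Longrightarrow> y \<in> fst L \<Longrightarrow> \<exists>z\<in>fst L. snd L z x \<and> snd L z y \<and>
        (\<forall>w\<in>fst L. snd L w x \<and> snd L w y \<longrightarrow> snd L w z)"
  using parts(7) by blast

lemma join_props: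
  assumes "x \<in> fst L" "y \<in> fst L"
  shows "ljoin L x y \<in> fst L \<and> snd L x (ljoin L x y) \<and> snd L y (ljoin L x y) \<and>
        (\<forall>w\<in>fst L. snd L x w \<and> snd L y w \<longrightarrow> snd L (ljoin L x y) w)"
proof -
  have "\<exists>!z. z \<in> fst L \<and> snd L x z \<and> snd L y z \<and>
        (\<forall>w\<in>fst L. snd L x w \<and> snd L y w \<longrightarrow> snd L z w)"
  proof -
    obtain z where z: "z \<in> fst L" "snd L x z" "snd L y z" "\<forall>w\<in>fst L. snd L x w \<and> snd L y w \<longrightarrow> snd L z w"
      using join_ex[OF assms] by blast
    show ?thesis
    proof (rule ex1I[of _ z])
      fix z' assume "z' \<in> fst L \<and> snd L x z' \<and> snd L y z' \<and> (\<forall>w\<in>fst L. snd L x w \<and> snd L y w \<longrightarrow> snd L z' w)"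
      then show "z' = z" using z antisym by blast
    qed (use z in blast)
  qed
  then show ?thesis unfolding ljoin_def by (rule theI')
qed

lemma meet_props:
  assumes "x \<in> fst L" "y \<in> fst L"
  shows "lmeet L x y \<in> fst L \<and> snd L (lmeet L x y) x \<and> snd L (lmeet L x y) y \<and>
        (\<forall>w\<in>fst L. snd L w x \<and> snd L w y \<longrightarrow> snd L w (lmeet L x y))"
proof -
  have "\<exists>!z. z \<in> fst L \<and> snd L z x \<and> snd L z y \<and>
        (\<forall>w\<in>fst L. snd L w x \<and> snd L w y \<longrightarrow> snd L w z)"
  proof -
    obtain z where z: "z \<in> fst L" "snd L z x" "snd L z y" "\<forall>w\<in>fst L. snd L w x \<and> snd L w y \<longrightarrow> snd L w z"
      using meet_ex[OF assms] by blast
    show ?thesis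
    proof (rule ex1I[of _ z])
      fix z' assume "z' \<in> fst L \<and> snd L z' x \<and> snd L z' y \<and> (\<forall>w\<in>fst L. snd L w x \<and> snd L w y \<longrightarrow> snd L w z')"
      then show "z' = z" using z antisym by blast
    qed (use z in blast)
  qed
  then show ?thesis unfolding lmeet_def by (rule theI')
qed

lemma join_C[simp]: "x \<in> fst L \<Longrightarrow> y \<in> fst L \<Longrightarrow> ljoin L x y \<in> fst L" using join_props by blast
lemma join_ub1: "x \<in> fst L \<Longrightarrow> y \<in> fst L \<Longrightarrow> snd L x (ljoin L x y)" using join_props by blast
lemma join_ub2: "x \<in> fst L \<Longrightarrow> y \<in> fst L \<Longrightarrow> snd L y (ljoin L x y)" using join_props by blast
lemma join_least: "x \<in> fst L \<Longrightarrow> y \<in> fst L \<Longrightarrow> w \<in> fst L \<Longrightarrow> snd L x w \<Longrightarrow> snd L y w \<Longrightarrow> snd L (ljoin L x y) w"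
  using join_props by blast
lemma meet_C[simp]: "x \<in> fst L \<Longrightarrow> y \<in> fst L \<Longrightarrow> lmeet L x y \<in> fst L" using meet_props by blast
lemma meet_lb1: "x \<in> fst L \<Longrightarrow> y \<in> fst L \<Longrightarrow> snd L (lmeet L x y) x" using meet_props by blast
lemma meet_lb2: "x \<in> fst L \<Longrightarrow> y \<in> fst L \<Longrightarrow> snd L (lmeet L x y) y" using meet_props by blast
lemma meet_greatest: "x \<in> fst L \<Longrightarrow> y \<in> fst L \<Longrightarrow> w \<in> fst L \<Longrightarrow> snd L w x \<Longrightarrow> snd L w y \<Longrightarrow> snd L w (lmeet L x y)"
  using meet_props by blast

lemma join_unique:
  assumes "x \<in> fst L" "y \<in> fst L" "z \<in> fst L" "snd L x z" "snd L y z"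
    "\<And>w. w \<in> fst L \<Longrightarrow> snd L x w \<Longrightarrow> snd L y w \<Longrightarrow> snd L z w"
  shows "ljoin L x y = z"
proof -
  have "snd L (ljoin L x y) z" using assms join_least by blast
  moreover have "snd L z (ljoin L x y)" using assms(6)[of "ljoin L x y"] assms(1,2) join_C join_ub1 join_ub2 by blast
  ultimately show ?thesis using antisym assms(1,2,3) join_C by blast
qed

lemma meet_unique:
  assumes "x \<in> fst L" "y \<in> fst L" "z \<in> fst L" "snd L z x" "snd L z y"
    "\<And>w. w \<in> fst L \<Longrightarrow> snd L w x \<Longrightarrow> snd L w y \<Longrightarrow> snd L w z"
  shows "lmeet L x y = z"
proof -
  have "snd L z (lmeet L x y)" using assms meet_greatest by blast
  moreover have "snd L (lmeet L x y) z" using assms(6)[of "lmeet L x y"] assms(1,2) meet_C meet_lb1 meet_lb2 by blast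
  ultimately show ?thesis using antisym assms(1,2,3) meet_C by blast
qed

lemma join_eq_right: "x \<in> fst L \<Longrightarrow> y \<in> fst L \<Longrightarrow> snd L x y \<Longrightarrow> ljoin L x y = y"
  by (rule join_unique) (auto simp: refl)
lemma join_eq_left: "x \<in> fst L \<Longrightarrow> y \<in> fst L \<Longrightarrow> snd L y x \<Longrightarrow> ljoin L x y = x"
  by (rule join_unique) (auto simp: refl)
lemma meet_eq_left: "x \<in> fst L \<Longrightarrow> y \<in> fst L \<Longrightarrow> snd L x y \<Longrightarrow> lmeet L x y = x"
  by (rule meet_unique) (auto simp: refl)
lemma meet_eq_right: "x \<in> fst L \<Longrightarrow> y \<in> fst L \<Longrightarrow> snd L y x \<Longrightarrow> lmeet L x y = y"
  by (rule meet_unique) (auto simp: refl)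
lemma join_le_iff: "x \<in> fst L \<Longrightarrow> y \<in> fst L \<Longrightarrow> ljoin L x y = y \<longleftrightarrow> snd L x y"
  using join_eq_right join_ub1 by metis

lemma join_comm: "x \<in> fst L \<Longrightarrow> y \<in> fst L \<Longrightarrow> ljoin L x y = ljoin L y x"
  by (rule join_unique) (auto simp: join_props)

lemma join_assoc: assumes "x \<in> fst L" "y \<in> fst L" "z \<in> fst L"
  shows "ljoin L (ljoin L x y) z = ljoin L x (ljoin L y z)"
proof (rule join_unique)
  have yz: "ljoin L y z \<in> fst L" using assms by simp
  have j: "ljoin L x (ljoin L y z) \<in> fst L" using assms by simp
  have "snd L y (ljoin L x (ljoin L y z))" using trans[OF _ yz j join_ub1 join_ub2] assms by simp
  then show "snd L (ljoin L x y) (ljoin L x (ljoin L y z))"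
    using assms join_least join_ub1 j by simp
  show "snd L z (ljoin L x (ljoin L y z))" using trans[OF _ yz j join_ub2 join_ub2] assms by simp
  fix w assume w: "w \<in> fst L" "snd L (ljoin L x y) w" "snd L z w"
  have "snd L x w" "snd L y w" using trans[OF _ _ w(1) join_ub1 w(2)] trans[OF _ _ w(1) join_ub2 w(2)] assms by auto
  then show "snd L (ljoin L x (ljoin L y z)) w" using assms w join_least by simp
qed (use assms in auto)

lemma join_mono: "x \<in> fst L \<Longrightarrow> y \<in> fst L \<Longrightarrow> x' \<in> fst L \<Longrightarrow> y' \<in> fst L \<Longrightarrow>
   snd L x x' \<Longrightarrow> snd L y y' \<Longrightarrow> snd L (ljoin L x y) (ljoin L x' y')"
  by (rule join_least) (auto intro: trans[OF _ _ _ _ join_ub1] trans[OF _ _ _ _ join_ub2])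
lemma meet_mono: "x \<in> fst L \<Longrightarrow> y \<in> fst L \<Longrightarrow> x' \<in> fst L \<Longrightarrow> y' \<in> fst L \<Longrightarrow>
   snd L x x' \<Longrightarrow> snd L y y' \<Longrightarrow> snd L (lmeet L x y) (lmeet L x' y')"
  by (rule meet_greatest) (auto intro: trans[OF _ _ _ meet_lb1] trans[OF _ _ _ meet_lb2])

lemma ex_minimal: "finite S \<Longrightarrow> S \<noteq> {} \<Longrightarrow> S \<subseteq> fst L \<Longrightarrow> \<exists>m\<in>S. \<forall>z\<in>S. snd L z m \<longrightarrow> z = m"
proof (induction S rule: finite_ne_induct)
  case (singleton x) then show ?case by auto
next
  case (insert x S)
  then obtain m where m: "m \<in> S" "\<forall>z\<in>S. snd L z m \<longrightarrow> z = m" by auto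
  show ?case
  proof (cases "snd L x m")
    case True
    have "\<forall>z\<in>insert x S. snd L z x \<longrightarrow> z = x"
    proof (intro ballI impI)
      fix z assume z: "z \<in> insert x S" "snd L z x"
      show "z = x"
      proof (cases "z = x")
        case False
        then have "z \<in> S" using z by auto
        moreover have "x \<in> fst L" "m \<in> fst L" "z \<in> fst L" using insert.prems m(1) z(1) by auto
        ultimately have "z = m" using m z True trans[of z x m] by blast
        then show ?thesis using z True antisym insert.prems m(1) by blast
      qed
    qed
    then show ?thesis by auto
  next
    case False
    then show ?thesis using m by auto
  qed
qed

lemma ex_maximal: "finite S \<Longrightarrow> S \<noteq> {} \<Longrightarrow> S \<subseteq> fst L \<Longrightarrow> \<exists>m\<in>S. \<forall>z\<in>S. snd L m z \<longrightarrow> z = m"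
proof (induction S rule: finite_ne_induct)
  case (singleton x) then show ?case by auto
next
  case (insert x S)
  then obtain m where m: "m \<in> S" "\<forall>z\<in>S. snd L m z \<longrightarrow> z = m" by auto
  show ?case
  proof (cases "snd L m x")
    case True
    have "\<forall>z\<in>insert x S. snd L x z \<longrightarrow> z = x"
    proof (intro ballI impI)
      fix z assume z: "z \<in> insert x S" "snd L x z"
      show "z = x"
      proof (cases "z = x")
        case False
        then have "z \<in> S" using z by auto
        moreover have "x \<in> fst L" "m \<in> fst L" "z \<in> fst L" using insert.prems m(1) z(1) by auto
        ultimately have "z = m" using m z True trans[of m x z] by blast
        then show ?thesis using z True antisym insert.prems m(1) by blast
      qed
    qed
    then show ?thesis by auto
  next
    case False
    then show ?thesis using m by auto
  qed
qed

lemma bot_ex: "\<exists>b\<in>fst L. \<forall>x\<in>fst L. snd L b x"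
proof -
  obtain m where m: "m \<in> fst L" "\<forall>z\<in>fst L. snd L z m \<longrightarrow> z = m"
    using ex_minimal[OF fin ne] by blast
  have "\<forall>x\<in>fst L. snd L m x"
  proof
    fix x assume x: "x \<in> fst L"
    have "lmeet L m x = m" using m meet_props[OF m(1) x] by metis
    then show "snd L m x" using meet_props[OF m(1) x] by metis
  qed
  then show ?thesis using m by blast
qed

lemma top_ex: "\<exists>b\<in>fst L. \<forall>x\<in>fst L. snd L x b"
proof -
  obtain m where m: "m \<in> fst L" "\<forall>z\<in>fst L. snd L m z \<longrightarrow> z = m"
    using ex_maximal[OF fin ne] by blast
  have "\<forall>x\<in>fst L. snd L x m"
  proof
    fix x assume x: "x \<in> fst L"
    have "ljoin L m x = m" using m join_props[OF m(1) x] by metis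
    then show "snd L x m" using join_props[OF m(1) x] by metis
  qed
  then show ?thesis using m by blast
qed

lemma bot_props: "lbot L \<in> fst L \<and> (\<forall>x\<in>fst L. snd L (lbot L) x)"
proof -
  have "\<exists>!z. z \<in> fst L \<and> (\<forall>x\<in>fst L. snd L z x)" using bot_ex antisym by metis
  then show ?thesis unfolding lbot_def by (rule theI')
qed
lemma top_props: "ltop L \<in> fst L \<and> (\<forall>x\<in>fst L. snd L x (ltop L))"
proof -
  have "\<exists>!z. z \<in> fst L \<and> (\<forall>x\<in>fst L. snd L x z)" using top_ex antisym by metis
  then show ?thesis unfolding ltop_def by (rule theI')
qed
lemma bot_C[simp]: "lbot L \<in> fst L" using bot_props by blast
lemma top_C[simp]: "ltop L \<in> fst L" using top_props by blast
lemma bot_le: "x \<in> fst L \<Longrightarrow> snd L (lbot L) x" using bot_props by blast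
lemma le_top: "x \<in> fst L \<Longrightarrow> snd L x (ltop L)" using top_props by blast
lemma bot_unique: "b \<in> fst L \<Longrightarrow> (\<forall>x\<in>fst L. snd L b x) \<Longrightarrow> lbot L = b"
  using antisym bot_props by blast
lemma top_unique: "b \<in> fst L \<Longrightarrow> (\<forall>x\<in>fst L. snd L x b) \<Longrightarrow> ltop L = b"
  using antisym top_props by blast

lemma join_bot_left: "x \<in> fst L \<Longrightarrow> ljoin L (lbot L) x = x" using join_eq_right bot_le by simp
lemma join_bot_right: "x \<in> fst L \<Longrightarrow> ljoin L x (lbot L) = x" using join_eq_left bot_le by simp
lemma meet_bot_left: "x \<in> fst L \<Longrightarrow> lmeet L (lbot L) x = lbot L" using meet_eq_left bot_le by simp
lemma join_top_left: "x \<in> fst L \<Longrightarrow> ljoin L (ltop L) x = ltop L" using join_eq_left le_top by simp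
lemma meet_top_left: "x \<in> fst L \<Longrightarrow> lmeet L (ltop L) x = x" using meet_eq_right le_top by simp

definition is_lub where
  "is_lub S z \<longleftrightarrow> z \<in> fst L \<and> (\<forall>s\<in>S. snd L s z) \<and> (\<forall>w\<in>fst L. (\<forall>s\<in>S. snd L s w) \<longrightarrow> snd L z w)"

lemma is_lub_unique: "is_lub S z \<Longrightarrow> is_lub S z' \<Longrightarrow> z = z'"
  unfolding is_lub_def using antisym by blast

lemma joinL_lub: "set J \<subseteq> fst L \<Longrightarrow> is_lub (set J) (joinL L J)"
proof (induction J)
  case Nil
  then show ?case by (auto simp: is_lub_def joinL_def bot_props)
next
  case (Cons a J)
  then have IH: "is_lub (set J) (joinL L J)" and a: "a \<in> fst L" by auto
  have eq: "joinL L (a # J) = ljoin L a (joinL L J)" by (simp add: joinL_def)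
  have jC: "joinL L J \<in> fst L" using IH is_lub_def by blast
  show ?case unfolding eq is_lub_def
  proof (intro conjI ballI impI)
    show "ljoin L a (joinL L J) \<in> fst L" using a jC by simp
  next
    fix s assume "s \<in> set (a # J)"
    then consider "s = a" | "s \<in> set J" by auto
    then show "snd L s (ljoin L a (joinL L J))"
    proof cases
      case 1 then show ?thesis using a jC join_ub1 by simp
    next
      case 2
      then have "s \<in> fst L" "snd L s (joinL L J)" using Cons.prems IH unfolding is_lub_def by auto
      then show ?thesis using trans[OF _ jC _ _ join_ub2] a jC by simp
    qed
  next
    fix w assume w: "w \<in> fst L" "\<forall>s\<in>set (a # J). snd L s w"
    then have "snd L (joinL L J) w" using IH unfolding is_lub_def by auto
    then show "snd L (ljoin L a (joinL L J)) w" using w a jC join_least by auto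
  qed
qed

lemma joinL_C: "set J \<subseteq> fst L \<Longrightarrow> joinL L J \<in> fst L" using joinL_lub is_lub_def by blast
lemma joinL_ub: "set J \<subseteq> fst L \<Longrightarrow> x \<in> set J \<Longrightarrow> snd L x (joinL L J)" using joinL_lub is_lub_def by blast
lemma joinL_least: "set J \<subseteq> fst L \<Longrightarrow> w \<in> fst L \<Longrightarrow> (\<forall>x\<in>set J. snd L x w) \<Longrightarrow> snd L (joinL L J) w"
  using joinL_lub is_lub_def by blast

definition llt' where "llt' x y \<longleftrightarrow> snd L x y \<and> x \<noteq> y"

lemma ex_cover_below:
  assumes x: "x \<in> fst L" and y: "y \<in> fst L" and lt: "llt L x y"
  shows "\<exists>z\<in>fst L. snd L x z \<and> covers L z y"
proof -
  let ?S = "{z\<in>fst L. snd L x z \<and> llt L z y}"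
  have "x \<in> ?S" using x lt refl[OF x] by simp
  then have neS: "?S \<noteq> {}" by blast
  have fS: "finite ?S" by (rule finite_subset[OF _ fin]) auto
  have sS: "?S \<subseteq> fst L" by auto
  obtain m where m: "m \<in> ?S" "\<forall>z\<in>?S. snd L m z \<longrightarrow> z = m"
    using ex_maximal[OF fS neS sS] by blast
  have "covers L m y"
    unfolding covers_def
  proof (intro conjI)
    show "m \<in> fst L" "y \<in> fst L" "llt L m y" using m y by auto
    show "\<not> (\<exists>z\<in>fst L. llt L m z \<and> llt L z y)"
    proof
      assume "\<exists>z\<in>fst L. llt L m z \<and> llt L z y"
      then obtain z where z: "z \<in> fst L" "llt L m z" "llt L z y" by blast
      have mS: "m \<in> fst L" "snd L x m" using m by auto
      have "snd L m z" using z(2) unfolding llt_def by blast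
      then have "snd L x z" using trans[OF x mS(1) z(1) mS(2)] by blast
      then have "z \<in> ?S" using z by auto
      then have "z = m" using m(2) \<open>snd L m z\<close> by blast
      then show False using z(2) unfolding llt_def by blast
    qed
  qed
  then show ?thesis using m by blast
qed

lemma ex_cover_above:
  assumes x: "x \<in> fst L" and y: "y \<in> fst L" and lt: "llt L x y"
  shows "\<exists>z\<in>fst L. snd L z y \<and> covers L x z"
proof -
  let ?S = "{z\<in>fst L. snd L z y \<and> llt L x z}"
  have "y \<in> ?S" using y lt refl[OF y] by simp
  then have neS: "?S \<noteq> {}" by blast
  have fS: "finite ?S" by (rule finite_subset[OF _ fin]) auto
  have sS: "?S \<subseteq> fst L" by auto
  obtain m where m: "m \<in> ?S" "\<forall>z\<in>?S. snd L z m \<longrightarrow> z = m"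
    using ex_minimal[OF fS neS sS] by blast
  have "covers L x m"
    unfolding covers_def
  proof (intro conjI)
    show "m \<in> fst L" "x \<in> fst L" "llt L x m" using m x by auto
    show "\<not> (\<exists>z\<in>fst L. llt L x z \<and> llt L z m)"
    proof
      assume "\<exists>z\<in>fst L. llt L x z \<and> llt L z m"
      then obtain z where z: "z \<in> fst L" "llt L x z" "llt L z m" by blast
      have mS: "m \<in> fst L" "snd L m y" using m by auto
      have "snd L z m" using z(3) unfolding llt_def by blast
      then have "snd L z y" using trans[OF z(1) mS(1) y _ mS(2)] by blast
      then have "z \<in> ?S" using z by auto
      then have "z = m" using m(2) \<open>snd L z m\<close> by blast
      then show False using z(3) unfolding llt_def by blast
    qed
  qed
  then show ?thesis using m by blast
qed

end


context FL begin

lemma chain_set: assumes "max_chain L F c" shows "set c \<subseteq> fst L"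
proof
  fix x assume "x \<in> set c"
  then obtain i where i: "i < length c" "x = c ! i" by (auto simp: in_set_conv_nth)
  show "x \<in> fst L"
  proof (cases i)
    case 0
    then have "x = hd c" using i assms unfolding max_chain_def by (metis hd_conv_nth)
    then show ?thesis using assms bot_C unfolding max_chain_def by simp
  next
    case (Suc j)
    then have "covers L (c ! j) (c ! i)" using i assms unfolding max_chain_def by simp
    then show ?thesis using i unfolding covers_def by simp
  qed
qed

lemma chain_bot: "max_chain L (lbot L) [lbot L]"
  unfolding max_chain_def by simp

lemma chain_snoc:
  assumes "max_chain L z c" "covers L z F"
  shows "max_chain L F (c @ [F])"
  unfolding max_chain_def
proof (intro conjI allI impI)
  show "c @ [F] \<noteq> []" by simp
  show "hd (c @ [F]) = lbot L" using assms(1) unfolding max_chain_def by simp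
  show "last (c @ [F]) = F" by simp
  fix i assume i: "Suc i < length (c @ [F])"
  show "covers L ((c @ [F]) ! i) ((c @ [F]) ! Suc i)"
  proof (cases "Suc i < length c")
    case True
    then show ?thesis using assms(1) unfolding max_chain_def by (simp add: nth_append)
  next
    case False
    then have "Suc i = length c" using i by simp
    moreover have "c ! i = z" using assms(1) \<open>Suc i = length c\<close> unfolding max_chain_def
      by (metis diff_Suc_1 last_conv_nth list.size(3) nat.distinct(1))
    ultimately show ?thesis using assms(2) by (simp add: nth_append)
  qed
qed

lemma chain_exists: "F \<in> fst L \<Longrightarrow> \<exists>c. max_chain L F c"
proof (induction "card {z\<in>fst L. llt L z F}" arbitrary: F rule: less_induct)
  case less
  show ?case
  proof (cases "F = lbot L")
    case True
    then show ?thesis using chain_bot by blast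
  next
    case False
    then have "llt L (lbot L) F" using less.prems bot_le unfolding llt_def by auto
    then obtain z where z: "z \<in> fst L" "covers L z F"
      using ex_cover_below[OF bot_C less.prems] by blast
    have zF: "snd L z F" "z \<noteq> F" using z unfolding covers_def llt_def by auto
    have sub: "{w\<in>fst L. llt L w z} \<subset> {w\<in>fst L. llt L w F}"
    proof
      show "{w\<in>fst L. llt L w z} \<subseteq> {w\<in>fst L. llt L w F}"
      proof
        fix w assume w: "w \<in> {w\<in>fst L. llt L w z}"
        then have "snd L w F" using trans[OF _ z(1) less.prems _ zF(1)] unfolding llt_def by auto
        moreover have "w \<noteq> F" using w zF antisym[OF z(1) less.prems zF(1)] unfolding llt_def by auto
        ultimately show "w \<in> {w\<in>fst L. llt L w F}" using w unfolding llt_def by auto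
      qed
      have "z \<in> {w\<in>fst L. llt L w F}" "z \<notin> {w\<in>fst L. llt L w z}" using z(1) zF unfolding llt_def by auto
      then show "{w\<in>fst L. llt L w z} \<noteq> {w\<in>fst L. llt L w F}" by blast
    qed
    have "card {w\<in>fst L. llt L w z} < card {w\<in>fst L. llt L w F}"
      by (rule psubset_card_mono[OF _ sub]) (rule finite_subset[OF _ fin], auto)
    then obtain c where "max_chain L z c" using less.hyps z(1) by blast
    then show ?thesis using chain_snoc z(2) by blast
  qed
qed

definition graded :: "('b \<Rightarrow> nat) \<Rightarrow> bool" where
  "graded r \<longleftrightarrow> r (lbot L) = 0 \<and> (\<forall>x y. covers L x y \<longrightarrow> r y = Suc (r x))"

lemma graded_chain:
  assumes g: "graded r" and c: "max_chain L F c"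
  shows "length c = Suc (r F)"
proof -
  have ne: "c \<noteq> []" and hd: "hd c = lbot L" and la: "last c = F"
    and cov: "\<And>i. Suc i < length c \<Longrightarrow> covers L (c ! i) (c ! Suc i)"
    using c unfolding max_chain_def by auto
  have r0: "r (lbot L) = 0" and rc: "\<And>x y. covers L x y \<Longrightarrow> r y = Suc (r x)"
    using g unfolding graded_def by auto
  have *: "i < length c \<Longrightarrow> r (c ! i) = i" for i
  proof (induction i)
    case 0
    then show ?case using ne hd r0 by (simp add: hd_conv_nth)
  next
    case (Suc i)
    then show ?case using rc[OF cov[OF Suc.prems]] by simp
  qed
  have "F = c ! (length c - 1)" using ne la by (simp add: last_conv_nth)
  then have "r F = length c - 1" using *[of "length c - 1"] ne by simp
  then show ?thesis using ne by simp
qed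

lemma graded_rk:
  assumes g: "graded r"
  shows "ranked L" "F \<in> fst L \<Longrightarrow> rk L F = r F"
proof -
  show "ranked L" unfolding ranked_def using graded_chain[OF g] by auto
  assume F: "F \<in> fst L"
  obtain c where c: "max_chain L F c" using chain_exists[OF F] by blast
  have ex: "\<exists>n c. max_chain L F c \<and> length c = Suc n" using c graded_chain[OF g c] by blast
  have "\<exists>c. max_chain L F c \<and> length c = Suc (rk L F)"
    unfolding rk_def using someI_ex[OF ex] .
  then show "rk L F = r F" using graded_chain[OF g] by fastforce
qed

lemma ranked_chain:
  assumes rd: "ranked L" and F: "F \<in> fst L" and c: "max_chain L F c"
  shows "length c = Suc (rk L F)"
proof -
  have ex: "\<exists>n c. max_chain L F c \<and> length c = Suc n"
    using c unfolding max_chain_def by (metis length_0_conv not0_implies_Suc)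
  obtain c' where "max_chain L F c'" "length c' = Suc (rk L F)"
    using someI_ex[OF ex] unfolding rk_def by blast
  then show ?thesis using rd F c unfolding ranked_def by metis
qed

lemma ranked_graded:
  assumes rd: "ranked L" shows "graded (rk L)"
  unfolding graded_def
proof (intro conjI allI impI)
  show "rk L (lbot L) = 0" using ranked_chain[OF rd bot_C chain_bot] by simp
  fix x y assume xy: "covers L x y"
  then have xC: "x \<in> fst L" and yC: "y \<in> fst L" unfolding covers_def by auto
  obtain c where c: "max_chain L x c" using chain_exists[OF xC] by blast
  have "length (c @ [y]) = Suc (rk L y)" using ranked_chain[OF rd yC chain_snoc[OF c xy]] .
  moreover have "length c = Suc (rk L x)" using ranked_chain[OF rd xC c] .
  ultimately show "rk L y = Suc (rk L x)" by simp
qed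

lemma graded_mono_aux:
  assumes g: "graded r"
  shows "\<forall>y\<in>fst L. r y = n \<longrightarrow> (\<forall>x\<in>fst L. llt L x y \<longrightarrow> r x < r y)"
proof (induction n rule: less_induct)
  case (less n)
  show ?case
  proof (intro ballI impI)
    fix y x assume y: "y \<in> fst L" "r y = n" and x: "x \<in> fst L" "llt L x y"
    obtain z where z: "z \<in> fst L" "snd L x z" "covers L z y" using ex_cover_below[OF x(1) y(1) x(2)] by blast
    have rz: "r y = Suc (r z)" using g z(3) unfolding graded_def by blast
    have "r x \<le> r z"
    proof (cases "x = z")
      case False
      then have "llt L x z" using z unfolding llt_def by auto
      then show ?thesis using less.IH[of "r z"] rz y z(1) x(1) by fastforce
    qed simp
    then show "r x < r y" using rz by simp
  qed
qed

lemma graded_strict: "graded r \<Longrightarrow> x \<in> fst L \<Longrightarrow> y \<in> fst L \<Longrightarrow> llt L x y \<Longrightarrow> r x < r y"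
  using graded_mono_aux by blast

lemma graded_mono: "graded r \<Longrightarrow> x \<in> fst L \<Longrightarrow> y \<in> fst L \<Longrightarrow> snd L x y \<Longrightarrow> r x \<le> r y"
  using graded_strict unfolding llt_def by fastforce

lemma graded_eq: "graded r \<Longrightarrow> x \<in> fst L \<Longrightarrow> y \<in> fst L \<Longrightarrow> snd L x y \<Longrightarrow> r y \<le> r x \<Longrightarrow> x = y"
  using graded_strict unfolding llt_def by fastforce

lemma graded_zero: "graded r \<Longrightarrow> x \<in> fst L \<Longrightarrow> r x = 0 \<longleftrightarrow> x = lbot L"
  using graded_eq[of r "lbot L" x] bot_le by (auto simp: graded_def)

end

locale GL = FL + assumes GL: "geometric_lattice L"
begin
lemma ranked: "ranked L" using GL unfolding geometric_lattice_def by blast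
lemma atomic: "atomic L" using GL unfolding geometric_lattice_def by blast
lemma semimod: "semimodular L" using GL unfolding geometric_lattice_def by blast
lemma gr: "graded (rk L)" using ranked_graded[OF ranked] .
lemma rk_bot[simp]: "rk L (lbot L) = 0" using gr unfolding graded_def by blast
lemma rk_cover: "covers L x y \<Longrightarrow> rk L y = Suc (rk L x)" using gr unfolding graded_def by blast
lemma rk_strict: "x \<in> fst L \<Longrightarrow> y \<in> fst L \<Longrightarrow> llt L x y \<Longrightarrow> rk L x < rk L y" using graded_strict[OF gr] .
lemma rk_mono: "x \<in> fst L \<Longrightarrow> y \<in> fst L \<Longrightarrow> snd L x y \<Longrightarrow> rk L x \<le> rk L y" using graded_mono[OF gr] .
lemma rk_eq: "x \<in> fst L \<Longrightarrow> y \<in> fst L \<Longrightarrow> snd L x y \<Longrightarrow> rk L y \<le> rk L x \<Longrightarrow> x = y" using graded_eq[OF gr] .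
lemma rk_zero: "x \<in> fst L \<Longrightarrow> rk L x = 0 \<longleftrightarrow> x = lbot L" using graded_zero[OF gr] .
lemma semimod': "x \<in> fst L \<Longrightarrow> y \<in> fst L \<Longrightarrow> rk L (lmeet L x y) + rk L (ljoin L x y) \<le> rk L x + rk L y"
  using semimod unfolding semimodular_def by blast
end

lemma GL_I: "geometric_lattice L \<Longrightarrow> GL L"
  unfolding GL_def GL_axioms_def FL_def geometric_lattice_def by blast


locale ISO = FL L1 for L1 :: "'b lat" + fixes L2 :: "'c lat" and \<psi> :: "'b \<Rightarrow> 'c"
  assumes iso: "lattice_iso L1 L2 \<psi>"
begin

lemma bij: "bij_betw \<psi> (fst L1) (fst L2)" using iso unfolding lattice_iso_def by blast
lemma ord: "x \<in> fst L1 \<Longrightarrow> y \<in> fst L1 \<Longrightarrow> snd L2 (\<psi> x) (\<psi> y) \<longleftrightarrow> snd L1 x y"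
  using iso unfolding lattice_iso_def by blast
lemma img: "fst L2 = \<psi> ` fst L1" using bij by (simp add: bij_betw_def)
lemma inj: "inj_on \<psi> (fst L1)" using bij by (simp add: bij_betw_def)
lemma mapsC: "x \<in> fst L1 \<Longrightarrow> \<psi> x \<in> fst L2" using img by blast
lemma surjC: "u \<in> fst L2 \<Longrightarrow> \<exists>x\<in>fst L1. u = \<psi> x" using img by blast

lemma FL2: "FL L2"
proof -
  have "finite (fst L2)" using img fin by simp
  moreover have "fst L2 \<noteq> {}" using img ne by simp
  moreover have "\<forall>u\<in>fst L2. snd L2 u u" using img ord refl by auto
  moreover have "\<forall>u\<in>fst L2. \<forall>v\<in>fst L2. snd L2 u v \<and> snd L2 v u \<longrightarrow> u = v"
  proof (intro ballI impI)
    fix u v assume "u \<in> fst L2" "v \<in> fst L2" "snd L2 u v \<and> snd L2 v u"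
    then obtain x y where "x \<in> fst L1" "y \<in> fst L1" "u = \<psi> x" "v = \<psi> y"
      using img by auto
    then show "u = v" using ord antisym \<open>snd L2 u v \<and> snd L2 v u\<close> by metis
  qed
  moreover have "\<forall>u\<in>fst L2. \<forall>v\<in>fst L2. \<forall>w\<in>fst L2. snd L2 u v \<and> snd L2 v w \<longrightarrow> snd L2 u w"
  proof (intro ballI impI)
    fix u v w assume "u \<in> fst L2" "v \<in> fst L2" "w \<in> fst L2" "snd L2 u v \<and> snd L2 v w"
    then obtain x y z where "x \<in> fst L1" "y \<in> fst L1" "z \<in> fst L1" "u = \<psi> x" "v = \<psi> y" "w = \<psi> z"
      using img by auto
    then show "snd L2 u w" using ord trans \<open>snd L2 u v \<and> snd L2 v w\<close> by metis
  qed
  moreover have "\<forall>u\<in>fst L2. \<forall>v\<in>fst L2. \<exists>z\<in>fst L2. snd L2 u z \<and> snd L2 v z \<and>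
        (\<forall>w\<in>fst L2. snd L2 u w \<and> snd L2 v w \<longrightarrow> snd L2 z w)"
  proof (intro ballI)
    fix u v assume "u \<in> fst L2" "v \<in> fst L2"
    then obtain x y where xy: "x \<in> fst L1" "y \<in> fst L1" "u = \<psi> x" "v = \<psi> y" using img by auto
    have "snd L2 u (\<psi> (ljoin L1 x y)) \<and> snd L2 v (\<psi> (ljoin L1 x y)) \<and>
        (\<forall>w\<in>fst L2. snd L2 u w \<and> snd L2 v w \<longrightarrow> snd L2 (\<psi> (ljoin L1 x y)) w)"
    proof (intro conjI ballI impI)
      show "snd L2 u (\<psi> (ljoin L1 x y))" using xy ord join_ub1 by simp
      show "snd L2 v (\<psi> (ljoin L1 x y))" using xy ord join_ub2 by simp
      fix w assume w: "w \<in> fst L2" "snd L2 u w \<and> snd L2 v w"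
      then obtain z where "z \<in> fst L1" "w = \<psi> z" using img by auto
      then show "snd L2 (\<psi> (ljoin L1 x y)) w" using w xy ord join_least by simp
    qed
    then show "\<exists>z\<in>fst L2. snd L2 u z \<and> snd L2 v z \<and>
        (\<forall>w\<in>fst L2. snd L2 u w \<and> snd L2 v w \<longrightarrow> snd L2 z w)" using xy mapsC by force
  qed
  moreover have "\<forall>u\<in>fst L2. \<forall>v\<in>fst L2. \<exists>z\<in>fst L2. snd L2 z u \<and> snd L2 z v \<and>
        (\<forall>w\<in>fst L2. snd L2 w u \<and> snd L2 w v \<longrightarrow> snd L2 w z)"
  proof (intro ballI)
    fix u v assume "u \<in> fst L2" "v \<in> fst L2"
    then obtain x y where xy: "x \<in> fst L1" "y \<in> fst L1" "u = \<psi> x" "v = \<psi> y" using img by auto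
    have "snd L2 (\<psi> (lmeet L1 x y)) u \<and> snd L2 (\<psi> (lmeet L1 x y)) v \<and>
        (\<forall>w\<in>fst L2. snd L2 w u \<and> snd L2 w v \<longrightarrow> snd L2 w (\<psi> (lmeet L1 x y)))"
    proof (intro conjI ballI impI)
      show "snd L2 (\<psi> (lmeet L1 x y)) u" using xy ord meet_lb1 by simp
      show "snd L2 (\<psi> (lmeet L1 x y)) v" using xy ord meet_lb2 by simp
      fix w assume w: "w \<in> fst L2" "snd L2 w u \<and> snd L2 w v"
      then obtain z where "z \<in> fst L1" "w = \<psi> z" using img by auto
      then show "snd L2 w (\<psi> (lmeet L1 x y))" using w xy ord meet_greatest by simp
    qed
    then show "\<exists>z\<in>fst L2. snd L2 z u \<and> snd L2 z v \<and>
        (\<forall>w\<in>fst L2. snd L2 w u \<and> snd L2 w v \<longrightarrow> snd L2 w z)" using xy mapsC by force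
  qed
  ultimately show ?thesis unfolding FL_def is_finite_lattice_def by (intro conjI)
qed

sublocale B: FL L2 by (rule FL2)

lemma join: "x \<in> fst L1 \<Longrightarrow> y \<in> fst L1 \<Longrightarrow> \<psi> (ljoin L1 x y) = ljoin L2 (\<psi> x) (\<psi> y)"
proof (rule B.join_unique[symmetric])
  assume xy: "x \<in> fst L1" "y \<in> fst L1"
  show "snd L2 (\<psi> x) (\<psi> (ljoin L1 x y))" "snd L2 (\<psi> y) (\<psi> (ljoin L1 x y))"
    using xy ord join_ub1 join_ub2 by auto
  fix w assume w: "w \<in> fst L2" "snd L2 (\<psi> x) w" "snd L2 (\<psi> y) w"
  then obtain z where "z \<in> fst L1" "w = \<psi> z" using img by auto
  then show "snd L2 (\<psi> (ljoin L1 x y)) w" using w xy ord join_least by simp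
qed (auto simp: mapsC)

lemma meet: "x \<in> fst L1 \<Longrightarrow> y \<in> fst L1 \<Longrightarrow> \<psi> (lmeet L1 x y) = lmeet L2 (\<psi> x) (\<psi> y)"
proof (rule B.meet_unique[symmetric])
  assume xy: "x \<in> fst L1" "y \<in> fst L1"
  show "snd L2 (\<psi> (lmeet L1 x y)) (\<psi> x)" "snd L2 (\<psi> (lmeet L1 x y)) (\<psi> y)"
    using xy ord meet_lb1 meet_lb2 by auto
  fix w assume w: "w \<in> fst L2" "snd L2 w (\<psi> x)" "snd L2 w (\<psi> y)"
  then obtain z where "z \<in> fst L1" "w = \<psi> z" using img by auto
  then show "snd L2 w (\<psi> (lmeet L1 x y))" using w xy ord meet_greatest by simp
qed (auto simp: mapsC)

lemma bot: "\<psi> (lbot L1) = lbot L2"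
  by (rule B.bot_unique[symmetric]) (auto simp: mapsC img ord bot_le)
lemma top: "\<psi> (ltop L1) = ltop L2"
  by (rule B.top_unique[symmetric]) (auto simp: mapsC img ord le_top)

lemma llt_iff: "x \<in> fst L1 \<Longrightarrow> y \<in> fst L1 \<Longrightarrow> llt L2 (\<psi> x) (\<psi> y) \<longleftrightarrow> llt L1 x y"
  unfolding llt_def using ord inj by (auto simp: inj_on_eq_iff)

lemma covers_iff: "x \<in> fst L1 \<Longrightarrow> y \<in> fst L1 \<Longrightarrow> covers L2 (\<psi> x) (\<psi> y) \<longleftrightarrow> covers L1 x y"
  unfolding covers_def using llt_iff mapsC img by auto

definition inv\<psi> where "inv\<psi> = the_inv_into (fst L1) \<psi>"
lemma inv_f: "x \<in> fst L1 \<Longrightarrow> inv\<psi> (\<psi> x) = x" unfolding inv\<psi>_def using the_inv_into_f_f[OF inj] .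
lemma f_inv: "u \<in> fst L2 \<Longrightarrow> \<psi> (inv\<psi> u) = u" unfolding inv\<psi>_def using f_the_inv_into_f[OF inj] img by blast
lemma inv_C: "u \<in> fst L2 \<Longrightarrow> inv\<psi> u \<in> fst L1" unfolding inv\<psi>_def using the_inv_into_into[OF inj] img by blast

lemma graded_transfer: "graded r \<Longrightarrow> B.graded (\<lambda>u. r (inv\<psi> u))"
  unfolding graded_def B.graded_def
proof (intro conjI allI impI)
  assume g: "r (lbot L1) = 0 \<and> (\<forall>x y. covers L1 x y \<longrightarrow> r y = Suc (r x))"
  show "r (inv\<psi> (lbot L2)) = 0" using g bot[symmetric] inv_f bot_C by simp
  fix u v assume uv: "covers L2 u v"
  then have "u \<in> fst L2" "v \<in> fst L2" unfolding covers_def by auto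
  then have "covers L1 (inv\<psi> u) (inv\<psi> v)" using covers_iff[of "inv\<psi> u" "inv\<psi> v"] uv inv_C f_inv by simp
  then show "r (inv\<psi> v) = Suc (r (inv\<psi> u))" using g by blast
qed

end

locale GISO = ISO + GL L1
begin

lemma gr2: "B.graded (\<lambda>u. rk L1 (inv\<psi> u))" using graded_transfer[OF gr] .
lemma ranked2: "ranked L2" using B.graded_rk(1)[OF gr2] .
lemma rk2: "x \<in> fst L1 \<Longrightarrow> rk L2 (\<psi> x) = rk L1 x"
  using B.graded_rk(2)[OF gr2, of "\<psi> x"] mapsC inv_f by simp

lemma atoms2: "atoms L2 = \<psi> ` atoms L1"
  unfolding atoms_def using rk2 img by auto

lemma joinL2: "set J \<subseteq> fst L1 \<Longrightarrow> joinL L2 (map \<psi> J) = \<psi> (joinL L1 J)"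
proof (induction J)
  case Nil then show ?case by (simp add: joinL_def bot)
next
  case (Cons a J)
  then show ?case using join[of a "joinL L1 J"] joinL_C by (simp add: joinL_def)
qed

lemma GL2: "GL L2"
proof -
  have "atomic L2" unfolding atomic_def
  proof
    fix u assume "u \<in> fst L2"
    then obtain x where x: "x \<in> fst L1" "u = \<psi> x" using img by auto
    then obtain J where J: "set J \<subseteq> atoms L1" "x = joinL L1 J" using atomic unfolding atomic_def by blast
    have "set J \<subseteq> fst L1" using J unfolding atoms_def by auto
    then have "u = joinL L2 (map \<psi> J)" using joinL2 x J by simp
    moreover have "set (map \<psi> J) \<subseteq> atoms L2" using J atoms2 by auto
    ultimately show "\<exists>J. set J \<subseteq> atoms L2 \<and> u = joinL L2 J" by blast
  qed
  moreover have "semimodular L2" unfolding semimodular_def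
  proof (intro ballI)
    fix u v assume "u \<in> fst L2" "v \<in> fst L2"
    then obtain x y where "x \<in> fst L1" "y \<in> fst L1" "u = \<psi> x" "v = \<psi> y" using img by auto
    then show "rk L2 (lmeet L2 u v) + rk L2 (ljoin L2 u v) \<le> rk L2 u + rk L2 v"
      using semimod' join[symmetric] meet[symmetric] rk2 by simp
  qed
  ultimately show ?thesis using ranked2 FL2 unfolding GL_def GL_axioms_def FL_def geometric_lattice_def
    by blast
qed

lemma modular2: "modular_flat L1 F \<Longrightarrow> modular_flat L2 (\<psi> F)"
  unfolding modular_flat_def
proof (intro conjI ballI)
  assume m: "F \<in> fst L1 \<and> (\<forall>F'\<in>fst L1. rk L1 (lmeet L1 F F') + rk L1 (ljoin L1 F F') = rk L1 F + rk L1 F')"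
  then show "\<psi> F \<in> fst L2" using mapsC by blast
  fix u assume "u \<in> fst L2"
  then obtain x where "x \<in> fst L1" "u = \<psi> x" using img by auto
  then show "rk L2 (lmeet L2 (\<psi> F) u) + rk L2 (ljoin L2 (\<psi> F) u) = rk L2 (\<psi> F) + rk L2 u"
    using m join[symmetric] meet[symmetric] rk2 by simp
qed

end

lemma ISO_I: "is_finite_lattice L1 \<Longrightarrow> lattice_iso L1 L2 \<psi> \<Longrightarrow> ISO L1 L2 \<psi>"
  unfolding ISO_def ISO_axioms_def FL_def by blast
lemma GISO_I: "geometric_lattice L1 \<Longrightarrow> lattice_iso L1 L2 \<psi> \<Longrightarrow> GISO L1 L2 \<psi>"
  unfolding GISO_def using ISO_I GL_I geometric_lattice_def by blast


definition Dn :: "'b lat \<Rightarrow> 'b \<Rightarrow> 'b lat" where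
  "Dn E F = ({x \<in> fst E. snd E x F}, snd E)"

locale DN = GL E for E :: "'b lat" + fixes F assumes FC: "F \<in> fst E"
begin

lemma Dn_C: "fst (Dn E F) = {x \<in> fst E. snd E x F}" by (simp add: Dn_def)
lemma Dn_le: "snd (Dn E F) = snd E" by (simp add: Dn_def)
lemma sub: "x \<in> fst (Dn E F) \<Longrightarrow> x \<in> fst E" by (simp add: Dn_C)
lemma subF: "x \<in> fst (Dn E F) \<Longrightarrow> snd E x F" by (simp add: Dn_C)
lemma memI: "x \<in> fst E \<Longrightarrow> snd E x F \<Longrightarrow> x \<in> fst (Dn E F)" by (simp add: Dn_C)

lemma FLD: "FL (Dn E F)"
proof -
  let ?C = "fst (Dn E F)"
  have "finite ?C" using fin by (simp add: Dn_C)
  moreover have "?C \<noteq> {}" using bot_C bot_le[OF FC] unfolding Dn_C by blast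
  moreover have "\<forall>u\<in>?C. snd (Dn E F) u u" using refl by (auto simp: Dn_C Dn_le)
  moreover have "\<forall>u\<in>?C. \<forall>v\<in>?C. snd (Dn E F) u v \<and> snd (Dn E F) v u \<longrightarrow> u = v"
    using antisym by (auto simp: Dn_C Dn_le)
  moreover have "\<forall>u\<in>?C. \<forall>v\<in>?C. \<forall>w\<in>?C. snd (Dn E F) u v \<and> snd (Dn E F) v w \<longrightarrow> snd (Dn E F) u w"
    unfolding Dn_C Dn_le using trans by blast
  moreover have "\<forall>u\<in>?C. \<forall>v\<in>?C. \<exists>z\<in>?C. snd (Dn E F) u z \<and> snd (Dn E F) v z \<and>
        (\<forall>w\<in>?C. snd (Dn E F) u w \<and> snd (Dn E F) v w \<longrightarrow> snd (Dn E F) z w)"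
  proof (intro ballI)
    fix u v assume uv: "u \<in> ?C" "v \<in> ?C"
    have jm: "ljoin E u v \<in> ?C" using uv join_least FC by (auto simp: Dn_C)
    show "\<exists>z\<in>?C. snd (Dn E F) u z \<and> snd (Dn E F) v z \<and>
        (\<forall>w\<in>?C. snd (Dn E F) u w \<and> snd (Dn E F) v w \<longrightarrow> snd (Dn E F) z w)"
    proof (rule bexI[of _ "ljoin E u v"])
      show "snd (Dn E F) u (ljoin E u v) \<and> snd (Dn E F) v (ljoin E u v) \<and>
        (\<forall>w\<in>?C. snd (Dn E F) u w \<and> snd (Dn E F) v w \<longrightarrow> snd (Dn E F) (ljoin E u v) w)"
        using uv join_ub1 join_ub2 join_least unfolding Dn_le Dn_C by simp
    qed (rule jm)
  qed
  moreover have "\<forall>u\<in>?C. \<forall>v\<in>?C. \<exists>z\<in>?C. snd (Dn E F) z u \<and> snd (Dn E F) z v \<and>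
        (\<forall>w\<in>?C. snd (Dn E F) w u \<and> snd (Dn E F) w v \<longrightarrow> snd (Dn E F) w z)"
  proof (intro ballI)
    fix u v assume uv: "u \<in> ?C" "v \<in> ?C"
    have jm: "lmeet E u v \<in> ?C" using uv meet_lb1 trans[OF _ _ FC] by (auto simp: Dn_C)
    show "\<exists>z\<in>?C. snd (Dn E F) z u \<and> snd (Dn E F) z v \<and>
        (\<forall>w\<in>?C. snd (Dn E F) w u \<and> snd (Dn E F) w v \<longrightarrow> snd (Dn E F) w z)"
    proof (rule bexI[of _ "lmeet E u v"])
      show "snd (Dn E F) (lmeet E u v) u \<and> snd (Dn E F) (lmeet E u v) v \<and>
        (\<forall>w\<in>?C. snd (Dn E F) w u \<and> snd (Dn E F) w v \<longrightarrow> snd (Dn E F) w (lmeet E u v))"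
        using uv meet_lb1 meet_lb2 meet_greatest unfolding Dn_le Dn_C by simp
    qed (rule jm)
  qed
  ultimately show ?thesis unfolding FL_def is_finite_lattice_def by (intro conjI)
qed

sublocale D: FL "Dn E F" by (rule FLD)

lemma joinD: "x \<in> fst (Dn E F) \<Longrightarrow> y \<in> fst (Dn E F) \<Longrightarrow> ljoin (Dn E F) x y = ljoin E x y"
  using D.join_unique[of x y "ljoin E x y"] join_ub1 join_ub2 join_least join_C FC
  by (auto simp: Dn_C Dn_le)

lemma meetD: "x \<in> fst (Dn E F) \<Longrightarrow> y \<in> fst (Dn E F) \<Longrightarrow> lmeet (Dn E F) x y = lmeet E x y"
proof -
  assume xy: "x \<in> fst (Dn E F)" "y \<in> fst (Dn E F)"
  then have m: "lmeet E x y \<in> fst (Dn E F)" using meet_lb1 trans[OF _ _ FC] by (auto simp: Dn_C)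
  show ?thesis using D.meet_unique[OF xy m] xy meet_lb1 meet_lb2 meet_greatest
    by (auto simp: Dn_C Dn_le)
qed

lemma botD: "lbot (Dn E F) = lbot E"
  using D.bot_unique[of "lbot E"] bot_le FC by (auto simp: Dn_C Dn_le)
lemma topD: "ltop (Dn E F) = F"
  using D.top_unique[of F] refl FC by (auto simp: Dn_C Dn_le)

lemma lltD: "llt (Dn E F) = llt E" unfolding llt_def Dn_le by simp

lemma coversD: "x \<in> fst (Dn E F) \<Longrightarrow> y \<in> fst (Dn E F) \<Longrightarrow> covers (Dn E F) x y \<longleftrightarrow> covers E x y"
  unfolding covers_def lltD
proof safe
  fix z assume xy: "x \<in> fst (Dn E F)" "y \<in> fst (Dn E F)" and z: "z \<in> fst E" "llt E x z" "llt E z y"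
    and n: "\<not> (\<exists>z\<in>fst (Dn E F). llt E x z \<and> llt E z y)"
  have "snd E z F" using z xy trans[OF z(1) _ FC] unfolding llt_def by (auto simp: Dn_C)
  then show False using n z by (auto simp: Dn_C)
qed (auto simp: Dn_C)

lemma grD: "D.graded (rk E)"
  unfolding D.graded_def
proof (intro conjI allI impI)
  show "rk E (lbot (Dn E F)) = 0" using botD by simp
  fix x y assume c: "covers (Dn E F) x y"
  then have "x \<in> fst (Dn E F)" "y \<in> fst (Dn E F)" unfolding covers_def by auto
  then have "covers E x y" using coversD c by simp
  then show "rk E y = Suc (rk E x)" by (rule rk_cover)
qed

lemma rkD: "x \<in> fst (Dn E F) \<Longrightarrow> rk (Dn E F) x = rk E x" using D.graded_rk(2)[OF grD] .

lemma atomsD: "atoms (Dn E F) = atoms E \<inter> fst (Dn E F)"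
proof -
  have "atoms (Dn E F) = {a \<in> fst (Dn E F). rk E a = 1}" unfolding atoms_def using rkD by auto
  then show ?thesis unfolding atoms_def using sub by auto
qed

lemma joinLD: "set J \<subseteq> fst (Dn E F) \<Longrightarrow> joinL (Dn E F) J = joinL E J"
proof (induction J)
  case Nil then show ?case by (simp add: joinL_def botD)
next
  case (Cons a J)
  then show ?case using joinD[of a "joinL E J"] D.joinL_C[of J] by (simp add: joinL_def)
qed

lemma GLD: "GL (Dn E F)"
proof -
  have "atomic (Dn E F)" unfolding atomic_def
  proof
    fix x assume x: "x \<in> fst (Dn E F)"
    then obtain J where J: "set J \<subseteq> atoms E" "x = joinL E J" using atomic sub unfolding atomic_def by blast
    have "set J \<subseteq> fst (Dn E F)"
    proof
      fix a assume "a \<in> set J"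
      then have "a \<in> fst E" "snd E a x" using J joinL_ub[of J a] unfolding atoms_def by auto
      then show "a \<in> fst (Dn E F)" using x trans[OF _ _ FC] by (auto simp: Dn_C)
    qed
    then show "\<exists>J. set J \<subseteq> atoms (Dn E F) \<and> x = joinL (Dn E F) J"
      using J joinLD atomsD by auto
  qed
  moreover have "semimodular (Dn E F)" unfolding semimodular_def
    using semimod' rkD joinD meetD sub D.join_C D.meet_C by simp
  moreover have "ranked (Dn E F)" using D.graded_rk(1)[OF grD] .
  ultimately show ?thesis using FLD unfolding GL_def GL_axioms_def FL_def geometric_lattice_def
    by blast
qed

end

lemma DN_I: "geometric_lattice E \<Longrightarrow> F \<in> fst E \<Longrightarrow> DN E F"
  unfolding DN_def DN_axioms_def using GL_I by blast


context FL begin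
lemma joinL_bots: "joinL L (map (\<lambda>_. lbot L) K) = lbot L"
  by (induction K) (auto simp: joinL_def join_bot_left)
lemma joinL_append_bots: "set J \<subseteq> fst L \<Longrightarrow> joinL L (J @ map (\<lambda>_. lbot L) K) = joinL L J"
proof (induction J)
  case Nil then show ?case using joinL_bots by (simp add: joinL_def)
next
  case (Cons a J) then show ?case by (simp add: joinL_def)
qed
lemma joinL_bots_append: "set J \<subseteq> fst L \<Longrightarrow> joinL L (map (\<lambda>_. lbot L) K @ J) = joinL L J"
proof (induction K)
  case Nil then show ?case by simp
next
  case (Cons a K) then show ?case using joinL_C[of J] by (simp add: joinL_def join_bot_left)
qed
end

locale PR = A: GL E1 + B: GL E2 for E1 :: "'b lat" and E2 :: "'c lat"
begin

abbreviation "P \<equiv> prod_lattice E1 E2"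

lemma P_C: "fst P = fst E1 \<times> fst E2" by (simp add: prod_lattice_def)
lemma P_le: "snd P (a, b) (c, d) \<longleftrightarrow> snd E1 a c \<and> snd E2 b d" by (simp add: prod_lattice_def)

lemma FLP: "FL P"
proof -
  have "finite (fst P)" using A.fin B.fin by (simp add: P_C)
  moreover have "fst P \<noteq> {}" using A.ne B.ne by (simp add: P_C)
  moreover have "\<forall>u\<in>fst P. snd P u u" using A.refl B.refl by (auto simp: P_C P_le)
  moreover have "\<forall>u\<in>fst P. \<forall>v\<in>fst P. snd P u v \<and> snd P v u \<longrightarrow> u = v"
  proof (intro ballI impI)
    fix u v assume "u \<in> fst P" "v \<in> fst P" "snd P u v \<and> snd P v u"
    then obtain a b c d where uv: "u = (a, b)" "v = (c, d)"
      "a \<in> fst E1" "c \<in> fst E1" "b \<in> fst E2" "d \<in> fst E2"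
      by (cases u; cases v) (simp add: P_C)
    then have "snd E1 a c" "snd E1 c a" "snd E2 b d" "snd E2 d b" using \<open>snd P u v \<and> snd P v u\<close> by (auto simp: P_le)
    then show "u = v" using uv A.antisym[of a c] B.antisym[of b d] by simp
  qed
  moreover have "\<forall>u\<in>fst P. \<forall>v\<in>fst P. \<forall>w\<in>fst P. snd P u v \<and> snd P v w \<longrightarrow> snd P u w"
  proof (intro ballI impI)
    fix u v w assume "u \<in> fst P" "v \<in> fst P" "w \<in> fst P" "snd P u v \<and> snd P v w"
    then obtain a b c d e f where uvw: "u = (a, b)" "v = (c, d)" "w = (e, f)"
      "a \<in> fst E1" "c \<in> fst E1" "e \<in> fst E1" "b \<in> fst E2" "d \<in> fst E2" "f \<in> fst E2"
      by (cases u; cases v; cases w) (simp add: P_C)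
    then have "snd E1 a c" "snd E1 c e" "snd E2 b d" "snd E2 d f" using \<open>snd P u v \<and> snd P v w\<close> by (auto simp: P_le)
    then show "snd P u w" using uvw A.trans[of a c e] B.trans[of b d f] by (simp add: P_le)
  qed
  moreover have "\<forall>u\<in>fst P. \<forall>v\<in>fst P. \<exists>z\<in>fst P. snd P u z \<and> snd P v z \<and>
        (\<forall>w\<in>fst P. snd P u w \<and> snd P v w \<longrightarrow> snd P z w)"
  proof (intro ballI)
    fix u v assume "u \<in> fst P" "v \<in> fst P"
    then obtain a b c d where uv: "u = (a, b)" "v = (c, d)" "a \<in> fst E1" "c \<in> fst E1" "b \<in> fst E2" "d \<in> fst E2"
      by (auto simp: P_C)
    show "\<exists>z\<in>fst P. snd P u z \<and> snd P v z \<and>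
        (\<forall>w\<in>fst P. snd P u w \<and> snd P v w \<longrightarrow> snd P z w)"
    proof (rule bexI[of _ "(ljoin E1 a c, ljoin E2 b d)"])
      show "(ljoin E1 a c, ljoin E2 b d) \<in> fst P" using uv by (simp add: P_C)
      show "snd P u (ljoin E1 a c, ljoin E2 b d) \<and> snd P v (ljoin E1 a c, ljoin E2 b d) \<and>
        (\<forall>w\<in>fst P. snd P u w \<and> snd P v w \<longrightarrow> snd P (ljoin E1 a c, ljoin E2 b d) w)"
      proof (intro conjI ballI impI)
        show "snd P u (ljoin E1 a c, ljoin E2 b d)" using uv A.join_ub1 B.join_ub1 by (simp add: P_le)
        show "snd P v (ljoin E1 a c, ljoin E2 b d)" using uv A.join_ub2 B.join_ub2 by (simp add: P_le)
        fix w assume w: "w \<in> fst P" "snd P u w \<and> snd P v w"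
        obtain e f where "w = (e, f)" by (cases w)
        then show "snd P (ljoin E1 a c, ljoin E2 b d) w" using w uv A.join_least B.join_least by (simp add: P_le P_C)
      qed
    qed
  qed
  moreover have "\<forall>u\<in>fst P. \<forall>v\<in>fst P. \<exists>z\<in>fst P. snd P z u \<and> snd P z v \<and>
        (\<forall>w\<in>fst P. snd P w u \<and> snd P w v \<longrightarrow> snd P w z)"
  proof (intro ballI)
    fix u v assume "u \<in> fst P" "v \<in> fst P"
    then obtain a b c d where uv: "u = (a, b)" "v = (c, d)" "a \<in> fst E1" "c \<in> fst E1" "b \<in> fst E2" "d \<in> fst E2"
      by (auto simp: P_C)
    show "\<exists>z\<in>fst P. snd P z u \<and> snd P z v \<and>
        (\<forall>w\<in>fst P. snd P w u \<and> snd P w v \<longrightarrow> snd P w z)"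
    proof (rule bexI[of _ "(lmeet E1 a c, lmeet E2 b d)"])
      show "(lmeet E1 a c, lmeet E2 b d) \<in> fst P" using uv by (simp add: P_C)
      show "snd P (lmeet E1 a c, lmeet E2 b d) u \<and> snd P (lmeet E1 a c, lmeet E2 b d) v \<and>
        (\<forall>w\<in>fst P. snd P w u \<and> snd P w v \<longrightarrow> snd P w (lmeet E1 a c, lmeet E2 b d))"
      proof (intro conjI ballI impI)
        show "snd P (lmeet E1 a c, lmeet E2 b d) u" using uv A.meet_lb1 B.meet_lb1 by (simp add: P_le)
        show "snd P (lmeet E1 a c, lmeet E2 b d) v" using uv A.meet_lb2 B.meet_lb2 by (simp add: P_le)
        fix w assume w: "w \<in> fst P" "snd P w u \<and> snd P w v"
        obtain e f where "w = (e, f)" by (cases w)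
        then show "snd P w (lmeet E1 a c, lmeet E2 b d)" using w uv A.meet_greatest B.meet_greatest by (simp add: P_le P_C)
      qed
    qed
  qed
  ultimately show ?thesis unfolding FL_def is_finite_lattice_def by (intro conjI)
qed

sublocale C: FL P by (rule FLP)

lemma joinP: assumes m: "a \<in> fst E1" "c \<in> fst E1" "b \<in> fst E2" "d \<in> fst E2"
  shows "ljoin P (a, b) (c, d) = (ljoin E1 a c, ljoin E2 b d)"
proof (rule C.join_unique)
  show "(a, b) \<in> fst P" "(c, d) \<in> fst P" "(ljoin E1 a c, ljoin E2 b d) \<in> fst P" using m by (simp_all add: P_C)
  show "snd P (a, b) (ljoin E1 a c, ljoin E2 b d)" using m A.join_ub1 B.join_ub1 by (simp add: P_le)
  show "snd P (c, d) (ljoin E1 a c, ljoin E2 b d)" using m A.join_ub2 B.join_ub2 by (simp add: P_le)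
  fix w assume w: "w \<in> fst P" "snd P (a, b) w" "snd P (c, d) w"
  obtain e f where "w = (e, f)" by (cases w)
  then show "snd P (ljoin E1 a c, ljoin E2 b d) w" using w m A.join_least B.join_least by (simp add: P_le P_C)
qed

lemma meetP: assumes m: "a \<in> fst E1" "c \<in> fst E1" "b \<in> fst E2" "d \<in> fst E2"
  shows "lmeet P (a, b) (c, d) = (lmeet E1 a c, lmeet E2 b d)"
proof (rule C.meet_unique)
  show "(a, b) \<in> fst P" "(c, d) \<in> fst P" "(lmeet E1 a c, lmeet E2 b d) \<in> fst P" using m by (simp_all add: P_C)
  show "snd P (lmeet E1 a c, lmeet E2 b d) (a, b)" using m A.meet_lb1 B.meet_lb1 by (simp add: P_le)
  show "snd P (lmeet E1 a c, lmeet E2 b d) (c, d)" using m A.meet_lb2 B.meet_lb2 by (simp add: P_le)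
  fix w assume w: "w \<in> fst P" "snd P w (a, b)" "snd P w (c, d)"
  obtain e f where "w = (e, f)" by (cases w)
  then show "snd P w (lmeet E1 a c, lmeet E2 b d)" using w m A.meet_greatest B.meet_greatest by (simp add: P_le P_C)
qed

lemma botP: "lbot P = (lbot E1, lbot E2)"
proof (rule C.bot_unique)
  show "(lbot E1, lbot E2) \<in> fst P" by (simp add: P_C)
  show "\<forall>x\<in>fst P. snd P (lbot E1, lbot E2) x"
  proof
    fix x assume "x \<in> fst P"
    then obtain e f where "x = (e, f)" "e \<in> fst E1" "f \<in> fst E2" by (cases x) (simp add: P_C)
    then show "snd P (lbot E1, lbot E2) x" using A.bot_le B.bot_le by (simp add: P_le)
  qed
qed
lemma topP: "ltop P = (ltop E1, ltop E2)"
proof (rule C.top_unique)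
  show "(ltop E1, ltop E2) \<in> fst P" by (simp add: P_C)
  show "\<forall>x\<in>fst P. snd P x (ltop E1, ltop E2)"
  proof
    fix x assume "x \<in> fst P"
    then obtain e f where "x = (e, f)" "e \<in> fst E1" "f \<in> fst E2" by (cases x) (simp add: P_C)
    then show "snd P x (ltop E1, ltop E2)" using A.le_top B.le_top by (simp add: P_le)
  qed
qed

lemma coversP:
  assumes "covers P (a, b) (c, d)"
  shows "(a = c \<and> covers E2 b d) \<or> (covers E1 a c \<and> b = d)"
proof -
  have m: "a \<in> fst E1" "c \<in> fst E1" "b \<in> fst E2" "d \<in> fst E2" using assms unfolding covers_def by (auto simp: P_C)
  have le: "snd E1 a c" "snd E2 b d" "(a, b) \<noteq> (c, d)" using assms unfolding covers_def llt_def by (auto simp: P_le)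
  have no: "\<And>z. z \<in> fst P \<Longrightarrow> llt P (a, b) z \<Longrightarrow> llt P z (c, d) \<Longrightarrow> False"
    using assms unfolding covers_def by blast
  show ?thesis
  proof (cases "a = c")
    case True
    then have "b \<noteq> d" using le by simp
    have "covers E2 b d" unfolding covers_def
    proof (intro conjI)
      show "llt E2 b d" using le \<open>b \<noteq> d\<close> unfolding llt_def by simp
      show "\<not> (\<exists>z\<in>fst E2. llt E2 b z \<and> llt E2 z d)"
      proof
        assume "\<exists>z\<in>fst E2. llt E2 b z \<and> llt E2 z d"
        then obtain z where z: "z \<in> fst E2" "llt E2 b z" "llt E2 z d" by blast
        show False using no[of "(a, z)"] z m A.refl True unfolding llt_def by (auto simp: P_C P_le)
      qed
    qed (use m in auto)
    then show ?thesis using True by simp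
  next
    case False
    have bd: "b = d"
    proof (rule ccontr)
      assume "b \<noteq> d"
      show False using no[of "(c, b)"] m le False \<open>b \<noteq> d\<close> A.refl B.refl unfolding llt_def by (auto simp: P_C P_le)
    qed
    have "covers E1 a c" unfolding covers_def
    proof (intro conjI)
      show "llt E1 a c" using le False unfolding llt_def by simp
      show "\<not> (\<exists>z\<in>fst E1. llt E1 a z \<and> llt E1 z c)"
      proof
        assume "\<exists>z\<in>fst E1. llt E1 a z \<and> llt E1 z c"
        then obtain z where z: "z \<in> fst E1" "llt E1 a z" "llt E1 z c" by blast
        show False using no[of "(z, b)"] z m B.refl bd unfolding llt_def by (auto simp: P_C P_le)
      qed
    qed (use m in auto)
    then show ?thesis using bd by simp
  qed
qed

lemma grP: "C.graded (\<lambda>(a, b). rk E1 a + rk E2 b)"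
  unfolding C.graded_def
proof (intro conjI allI impI)
  show "(case lbot P of (a, b) \<Rightarrow> rk E1 a + rk E2 b) = 0" by (simp add: botP)
  fix u v assume c: "covers P u v"
  obtain a b c d where uv: "u = (a, b)" "v = (c, d)" by (cases u; cases v) auto
  then have "covers P (a, b) (c, d)" using c by simp
  then consider "a = c" "covers E2 b d" | "covers E1 a c" "b = d" using coversP by blast
  then show "(case v of (a, b) \<Rightarrow> rk E1 a + rk E2 b) = Suc (case u of (a, b) \<Rightarrow> rk E1 a + rk E2 b)"
  proof cases
    case 1 then show ?thesis using uv B.rk_cover[OF 1(2)] by simp
  next
    case 2 then show ?thesis using uv A.rk_cover[OF 2(1)] by simp
  qed
qed

lemma rkP: "a \<in> fst E1 \<Longrightarrow> b \<in> fst E2 \<Longrightarrow> rk P (a, b) = rk E1 a + rk E2 b"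
  using C.graded_rk(2)[OF grP, of "(a, b)"] by (simp add: P_C)

lemma atom_left: assumes "a \<in> atoms E1" shows "(a, lbot E2) \<in> atoms P"
proof -
  have "a \<in> fst E1" "rk E1 a = 1" using assms unfolding atoms_def by auto
  then show ?thesis unfolding atoms_def using rkP[of a "lbot E2"] by (simp add: P_C)
qed
lemma atom_right: assumes "b \<in> atoms E2" shows "(lbot E1, b) \<in> atoms P"
proof -
  have "b \<in> fst E2" "rk E2 b = 1" using assms unfolding atoms_def by auto
  then show ?thesis unfolding atoms_def using rkP[of "lbot E1" b] by (simp add: P_C)
qed
lemma atomsP_cases: assumes "(a, b) \<in> atoms P"
  shows "(a \<in> atoms E1 \<and> b = lbot E2) \<or> (a = lbot E1 \<and> b \<in> atoms E2)"
proof -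
  have m: "a \<in> fst E1" "b \<in> fst E2" and r: "rk E1 a + rk E2 b = 1"
    using assms rkP unfolding atoms_def by (auto simp: P_C)
  then consider "rk E1 a = 1" "rk E2 b = 0" | "rk E1 a = 0" "rk E2 b = 1" by linarith
  then show ?thesis
  proof cases
    case 1 then show ?thesis using m B.rk_zero[of b] unfolding atoms_def by simp
  next
    case 2 then show ?thesis using m A.rk_zero[of a] unfolding atoms_def by simp
  qed
qed

lemma joinLP: "set K \<subseteq> fst P \<Longrightarrow> joinL P K = (joinL E1 (map fst K), joinL E2 (map snd K))"
proof (induction K)
  case Nil then show ?case by (simp add: joinL_def botP)
next
  case (Cons k K)
  obtain a b where k: "k = (a, b)" by (cases k)
  have "set (map fst K) \<subseteq> fst E1" "set (map snd K) \<subseteq> fst E2" using Cons.prems by (auto simp: P_C)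
  then have "joinL E1 (map fst K) \<in> fst E1" "joinL E2 (map snd K) \<in> fst E2" using A.joinL_C B.joinL_C by auto
  moreover have "a \<in> fst E1" "b \<in> fst E2" using Cons.prems k by (auto simp: P_C)
  moreover have IH: "joinL P K = (joinL E1 (map fst K), joinL E2 (map snd K))" using Cons by simp
  moreover have "joinL P (k # K) = ljoin P k (joinL P K)" by (simp add: joinL_def)
  moreover have "joinL E1 (map fst (k # K)) = ljoin E1 a (joinL E1 (map fst K))" using k by (simp add: joinL_def)
  moreover have "joinL E2 (map snd (k # K)) = ljoin E2 b (joinL E2 (map snd K))" using k by (simp add: joinL_def)
  ultimately show ?case using joinP[of a "joinL E1 (map fst K)" b "joinL E2 (map snd K)"] k by simp
qed

lemma GLP: "GL P"
proof -
  have "atomic P" unfolding atomic_def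
  proof
    fix u assume "u \<in> fst P"
    then obtain x y where u: "u = (x, y)" "x \<in> fst E1" "y \<in> fst E2" by (auto simp: P_C)
    obtain J1 where J1: "set J1 \<subseteq> atoms E1" "x = joinL E1 J1" using A.atomic u unfolding atomic_def by blast
    obtain J2 where J2: "set J2 \<subseteq> atoms E2" "y = joinL E2 J2" using B.atomic u unfolding atomic_def by blast
    have s1: "set J1 \<subseteq> fst E1" "set J2 \<subseteq> fst E2" using J1 J2 unfolding atoms_def by auto
    let ?K = "map (\<lambda>a. (a, lbot E2)) J1 @ map (\<lambda>b. (lbot E1, b)) J2"
    have K: "set ?K \<subseteq> atoms P" using J1 J2 atom_left atom_right by auto
    have KC: "set ?K \<subseteq> fst P" using s1 by (auto simp: P_C)
    have e1: "map fst ?K = J1 @ map (\<lambda>_. lbot E1) J2" by (simp add: comp_def)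
    have e2: "map snd ?K = map (\<lambda>_. lbot E2) J1 @ J2" by (simp add: comp_def)
    have "joinL P ?K = (joinL E1 (map fst ?K), joinL E2 (map snd ?K))" using joinLP[OF KC] .
    also have "\<dots> = (x, y)" unfolding e1 e2
      by (simp only: A.joinL_append_bots[OF s1(1)] B.joinL_bots_append[OF s1(2)] J1(2) J2(2))
    finally have "joinL P ?K = (x, y)" .
    then show "\<exists>J. set J \<subseteq> atoms P \<and> u = joinL P J" using K u by metis
  qed
  moreover have "semimodular P" unfolding semimodular_def
  proof (intro ballI)
    fix u v assume "u \<in> fst P" "v \<in> fst P"
    then obtain a b c d where uv: "u = (a, b)" "v = (c, d)" "a \<in> fst E1" "c \<in> fst E1" "b \<in> fst E2" "d \<in> fst E2"
      by (auto simp: P_C)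
    have "rk E1 (lmeet E1 a c) + rk E1 (ljoin E1 a c) \<le> rk E1 a + rk E1 c" using A.semimod' uv by simp
    moreover have "rk E2 (lmeet E2 b d) + rk E2 (ljoin E2 b d) \<le> rk E2 b + rk E2 d" using B.semimod' uv by simp
    ultimately show "rk P (lmeet P u v) + rk P (ljoin P u v) \<le> rk P u + rk P v"
      using uv joinP meetP rkP by simp
  qed
  moreover have "ranked P" using C.graded_rk(1)[OF grP] .
  ultimately show ?thesis using FLP unfolding GL_def GL_axioms_def FL_def geometric_lattice_def
    by blast
qed

lemma modular_topbot: "modular_flat P (ltop E1, lbot E2)"
  unfolding modular_flat_def
proof (intro conjI ballI)
  show "(ltop E1, lbot E2) \<in> fst P" by (simp add: P_C)
  fix u assume "u \<in> fst P"
  then obtain a b where u: "u = (a, b)" "a \<in> fst E1" "b \<in> fst E2" by (auto simp: P_C)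
  show "rk P (lmeet P (ltop E1, lbot E2) u) + rk P (ljoin P (ltop E1, lbot E2) u) =
      rk P (ltop E1, lbot E2) + rk P u"
  proof -
    have "lmeet P (ltop E1, lbot E2) u = (a, lbot E2)"
      using meetP[of "ltop E1" a "lbot E2" b] u A.meet_top_left[of a] B.meet_bot_left[of b] by simp
    moreover have "ljoin P (ltop E1, lbot E2) u = (ltop E1, b)"
      using joinP[of "ltop E1" a "lbot E2" b] u A.join_top_left[of a] B.join_bot_left[of b] by simp
    ultimately show ?thesis using u rkP[of a "lbot E2"] rkP[of "ltop E1" b] rkP[of "ltop E1" "lbot E2"] rkP[of a b]
      by simp
  qed
qed

end

lemma PR_I: "geometric_lattice E1 \<Longrightarrow> geometric_lattice E2 \<Longrightarrow> PR E1 E2"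
  unfolding PR_def by (intro conjI GL_I)


lemma GL_geo: "GL L \<Longrightarrow> geometric_lattice L"
  unfolding GL_def GL_axioms_def by blast

context GL begin

lemma KL:
  assumes FC: "F \<in> fst L" and GC: "G \<in> fst L" and mF: "modular_flat L F"
    and FG: "lmeet L G F = lbot L"
    and x: "x \<in> fst L" "snd L x F" and y: "y \<in> fst L" "snd L y G"
  shows "rk L (ljoin L x y) = rk L x + rk L y"
proof -
  have "rk L (lmeet L x y) + rk L (ljoin L x y) \<le> rk L x + rk L y" using semimod' x(1) y(1) by simp
  then have le1: "rk L (ljoin L x y) \<le> rk L x + rk L y" by simp
  have Fy: "lmeet L F y = lbot L"
  proof -
    have "snd L (lmeet L F y) G" using trans[OF meet_C[OF FC y(1)] y(1) GC meet_lb2[OF FC y(1)] y(2)] .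
    moreover have "snd L (lmeet L F y) F" using meet_lb1[OF FC y(1)] .
    ultimately have "snd L (lmeet L F y) (lmeet L G F)" using meet_greatest[OF GC FC] FC y(1) by simp
    then have "snd L (lmeet L F y) (lbot L)" using FG by simp
    then show ?thesis using antisym[OF meet_C[OF FC y(1)] bot_C] bot_le[OF meet_C[OF FC y(1)]] by simp
  qed
  have "rk L (lmeet L F y) + rk L (ljoin L F y) = rk L F + rk L y" using mF y(1) unfolding modular_flat_def by blast
  then have rFy: "rk L (ljoin L F y) = rk L F + rk L y" using Fy by simp
  have xy: "ljoin L x y \<in> fst L" using x y by simp
  have eq: "ljoin L F (ljoin L x y) = ljoin L F y"
  proof (rule antisym)
    show "ljoin L F (ljoin L x y) \<in> fst L" "ljoin L F y \<in> fst L" using FC xy y by auto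
    have "snd L x (ljoin L F y)" using trans[OF x(1) FC _ x(2) join_ub1[OF FC y(1)]] FC y by simp
    then have "snd L (ljoin L x y) (ljoin L F y)" using join_least[OF x(1) y(1)] join_ub2[OF FC y(1)] FC y by simp
    then show "snd L (ljoin L F (ljoin L x y)) (ljoin L F y)"
      using join_least[OF FC xy] join_ub1[OF FC y(1)] FC y by simp
    show "snd L (ljoin L F y) (ljoin L F (ljoin L x y))"
      using join_mono[OF FC y(1) FC xy refl[OF FC] join_ub2[OF x(1) y(1)]] .
  qed
  have "rk L (lmeet L F (ljoin L x y)) + rk L (ljoin L F (ljoin L x y)) \<le> rk L F + rk L (ljoin L x y)"
    using semimod' FC xy by simp
  moreover have "rk L x \<le> rk L (lmeet L F (ljoin L x y))"
    using rk_mono[OF x(1) meet_C[OF FC xy] meet_greatest[OF FC xy x(1) x(2) join_ub1[OF x(1) y(1)]]] .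
  ultimately have "rk L x + rk L y \<le> rk L (ljoin L x y)" using eq rFy by simp
  then show ?thesis using le1 by simp
qed

lemma KL_inj:
  assumes FC: "F \<in> fst L" and GC: "G \<in> fst L" and mF: "modular_flat L F"
    and FG: "lmeet L G F = lbot L"
    and x: "x \<in> fst L" "snd L x F" and y: "y \<in> fst L" "snd L y G"
    and x': "x' \<in> fst L" "snd L x' F" and y': "y' \<in> fst L" "snd L y' G"
    and eq: "ljoin L x y = ljoin L x' y'"
  shows "x = x' \<and> y = y'"
proof -
  let ?X = "ljoin L x x'" and ?Y = "ljoin L y y'" and ?Z = "ljoin L x y"
  have XC: "?X \<in> fst L" and YC: "?Y \<in> fst L" and ZC: "?Z \<in> fst L" using x x' y y' by auto
  have XF: "snd L ?X F" using join_least[OF x(1) x'(1) FC x(2) x'(2)] .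
  have YG: "snd L ?Y G" using join_least[OF y(1) y'(1) GC y(2) y'(2)] .
  have "ljoin L ?X ?Y = ?Z"
  proof (rule antisym)
    show "ljoin L ?X ?Y \<in> fst L" using XC YC by simp
    show "?Z \<in> fst L" by (rule ZC)
    have a: "snd L x ?Z" "snd L y ?Z" using join_ub1 join_ub2 x y by auto
    have b: "snd L x' ?Z" "snd L y' ?Z" using join_ub1[OF x'(1) y'(1)] join_ub2[OF x'(1) y'(1)] eq by auto
    have "snd L ?X ?Z" using join_least[OF x(1) x'(1) ZC a(1) b(1)] .
    moreover have "snd L ?Y ?Z" using join_least[OF y(1) y'(1) ZC a(2) b(2)] .
    ultimately show "snd L (ljoin L ?X ?Y) ?Z" using join_least[OF XC YC ZC] by simp
    show "snd L ?Z (ljoin L ?X ?Y)"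
      using join_mono[OF x(1) y(1) XC YC join_ub1[OF x(1) x'(1)] join_ub1[OF y(1) y'(1)]] .
  qed
  then have r: "rk L ?Z = rk L ?X + rk L ?Y" using KL[OF FC GC mF FG XC XF YC YG] by simp
  have r1: "rk L ?Z = rk L x + rk L y" using KL[OF FC GC mF FG x y] .
  have r2: "rk L ?Z = rk L x' + rk L y'" using KL[OF FC GC mF FG x' y'] eq by simp
  have m1: "rk L x \<le> rk L ?X" "rk L x' \<le> rk L ?X" using rk_mono XC x x' join_ub1 join_ub2 by auto
  have m2: "rk L y \<le> rk L ?Y" "rk L y' \<le> rk L ?Y" using rk_mono YC y y' join_ub1 join_ub2 by auto
  have "x = ?X" using rk_eq[OF x(1) XC join_ub1[OF x(1) x'(1)]] r r1 m1 m2 by linarith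
  moreover have "x' = ?X" using rk_eq[OF x'(1) XC join_ub2[OF x(1) x'(1)]] r r2 m1 m2 by linarith
  moreover have "y = ?Y" using rk_eq[OF y(1) YC join_ub1[OF y(1) y'(1)]] r r1 m1 m2 by linarith
  moreover have "y' = ?Y" using rk_eq[OF y'(1) YC join_ub2[OF y(1) y'(1)]] r r2 m1 m2 by linarith
  ultimately show ?thesis by simp
qed

end

lemma ME_facts:
  assumes GLL: "geometric_lattice L" and me: "modular_extension L E \<iota>"
  shows "GL E" "lattice_embedding L E \<iota>" "Fiota L \<iota> \<in> fst E" "modular_flat E (Fiota L \<iota>)"
    "\<iota> ` fst L = fst (Dn E (Fiota L \<iota>))"
proof -
  interpret L: GL L using GL_I[OF GLL] .
  show GE: "GL E" using me unfolding modular_extension_def using GL_I by blast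
  interpret E: GL E by (rule GE)
  show emb: "lattice_embedding L E \<iota>" using me unfolding modular_extension_def by blast
  obtain F where F: "F \<in> fst E" "modular_flat E F" "\<iota> ` fst L = {x \<in> fst E. snd E (lbot E) x \<and> snd E x F}"
    using me unfolding modular_extension_def by blast
  have F': "\<iota> ` fst L = {x \<in> fst E. snd E x F}" using F(3) E.bot_le by auto
  then have "F \<in> \<iota> ` fst L" using F(1) E.refl by auto
  then obtain a where a: "a \<in> fst L" "F = \<iota> a" by auto
  have ord: "\<And>x y. x \<in> fst L \<Longrightarrow> y \<in> fst L \<Longrightarrow> snd L x y \<Longrightarrow> snd E (\<iota> x) (\<iota> y)"
    using emb unfolding lattice_embedding_def by blast
  have "\<iota> (ltop L) \<in> \<iota> ` fst L" using L.top_C by blast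
  then have t1: "snd E (\<iota> (ltop L)) F" "\<iota> (ltop L) \<in> fst E" using F' by auto
  have t2: "snd E F (\<iota> (ltop L))" using ord[OF a(1) L.top_C L.le_top[OF a(1)]] a by simp
  have eq: "Fiota L \<iota> = F" unfolding Fiota_def using E.antisym[OF t1(2) F(1) t1(1) t2] .
  show "Fiota L \<iota> \<in> fst E" "modular_flat E (Fiota L \<iota>)" using eq F by auto
  show "\<iota> ` fst L = fst (Dn E (Fiota L \<iota>))" using F' eq by (simp add: Dn_def)
qed

lemma ME_iso:
  assumes GLL: "geometric_lattice L" and me: "modular_extension L E \<iota>"
  shows "lattice_iso L (Dn E (Fiota L \<iota>)) \<iota>"
proof -
  interpret L: GL L using GL_I[OF GLL] .
  have f: "GL E" "lattice_embedding L E \<iota>" "Fiota L \<iota> \<in> fst E" "modular_flat E (Fiota L \<iota>)"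
    "\<iota> ` fst L = fst (Dn E (Fiota L \<iota>))" using ME_facts[OF GLL me] by auto
  interpret E: GL E by (rule f(1))
  have inj: "inj_on \<iota> (fst L)" and ord: "\<And>x y. x \<in> fst L \<Longrightarrow> y \<in> fst L \<Longrightarrow> snd L x y \<Longrightarrow> snd E (\<iota> x) (\<iota> y)"
    and jn: "\<And>x y. x \<in> fst L \<Longrightarrow> y \<in> fst L \<Longrightarrow> \<iota> (ljoin L x y) = ljoin E (\<iota> x) (\<iota> y)"
    and im: "\<iota> ` fst L \<subseteq> fst E"
    using f(2) unfolding lattice_embedding_def by auto
  show ?thesis unfolding lattice_iso_def
  proof (intro conjI ballI)
    show "bij_betw \<iota> (fst L) (fst (Dn E (Fiota L \<iota>)))" using inj f(5) by (simp add: bij_betw_def)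
    fix x y assume xy: "x \<in> fst L" "y \<in> fst L"
    show "snd L x y = snd (Dn E (Fiota L \<iota>)) (\<iota> x) (\<iota> y)"
    proof
      assume "snd L x y" then show "snd (Dn E (Fiota L \<iota>)) (\<iota> x) (\<iota> y)" using ord xy by (simp add: Dn_def)
    next
      assume "snd (Dn E (Fiota L \<iota>)) (\<iota> x) (\<iota> y)"
      then have "snd E (\<iota> x) (\<iota> y)" by (simp add: Dn_def)
      then have "ljoin E (\<iota> x) (\<iota> y) = \<iota> y" using E.join_eq_right im xy by auto
      then have "\<iota> (ljoin L x y) = \<iota> y" using jn xy by simp
      then have "ljoin L x y = y" using inj xy L.join_C unfolding inj_on_def by blast
      then show "snd L x y" using L.join_le_iff xy by simp
    qed
  qed
qed

lemma ME_rk: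
  assumes GLL: "geometric_lattice L" and me: "modular_extension L E \<iota>" and x: "x \<in> fst L"
  shows "rk E (\<iota> x) = rk L x"
proof -
  have f: "GL E" "Fiota L \<iota> \<in> fst E" "\<iota> ` fst L = fst (Dn E (Fiota L \<iota>))" using ME_facts[OF GLL me] by auto
  interpret D: DN E "Fiota L \<iota>" unfolding DN_def DN_axioms_def using f by blast
  interpret I: GISO L "Dn E (Fiota L \<iota>)" \<iota> using GISO_I[OF GLL ME_iso[OF GLL me]] .
  have "\<iota> x \<in> fst (Dn E (Fiota L \<iota>))" using f(3) x by blast
  then show ?thesis using I.rk2[OF x] D.rkD by simp
qed

lemma ME_bot:
  assumes GLL: "geometric_lattice L" and me: "modular_extension L E \<iota>"
  shows "\<iota> (lbot L) = lbot E"
proof -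
  have f: "GL E" "Fiota L \<iota> \<in> fst E" "\<iota> ` fst L = fst (Dn E (Fiota L \<iota>))" using ME_facts[OF GLL me] by auto
  interpret D: DN E "Fiota L \<iota>" unfolding DN_def DN_axioms_def using f by blast
  interpret I: GISO L "Dn E (Fiota L \<iota>)" \<iota> using GISO_I[OF GLL ME_iso[OF GLL me]] .
  show ?thesis using I.bot D.botD by simp
qed


context FL begin
lemma join4: assumes "a \<in> fst L" "b \<in> fst L" "c \<in> fst L" "d \<in> fst L"
  shows "ljoin L (ljoin L a b) (ljoin L c d) = ljoin L (ljoin L a c) (ljoin L b d)"
proof -
  have "ljoin L (ljoin L a b) (ljoin L c d) = ljoin L a (ljoin L b (ljoin L c d))"
    using join_assoc assms by simp
  also have "ljoin L b (ljoin L c d) = ljoin L c (ljoin L b d)"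
    using join_assoc[of b c d] join_assoc[of c b d] join_comm[of b c] assms by simp
  also have "ljoin L a (ljoin L c (ljoin L b d)) = ljoin L (ljoin L a c) (ljoin L b d)"
    using join_assoc assms by simp
  finally show ?thesis .
qed
end

interpretation fm: module "\<lambda>(c::rat) (f :: 'b \<Rightarrow> rat) X. c * f X"
  by unfold_locales (auto simp: fun_eq_iff algebra_simps)

lemma relspan_eq: "md_relspan L = fm.span (md_relations L)" unfolding md_relspan_def by simp

lemma nontriv_top_bot:
  assumes "geometric_lattice L" "nontrivial_lattice L" shows "ltop L \<noteq> lbot L"
proof
  interpret L: GL L using GL_I[OF assms(1)] .
  assume tb: "ltop L = lbot L"
  have "fst L \<subseteq> {lbot L}"
  proof
    fix x assume x: "x \<in> fst L"
    then have "x = lbot L" using L.antisym[OF x L.bot_C] L.le_top[OF x] L.bot_le[OF x] tb by simp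
    then show "x \<in> {lbot L}" by simp
  qed
  then have "card (fst L) \<le> 1" using card_mono[of "{lbot L}" "fst L"] by simp
  then show False using assms(2) unfolding nontrivial_lattice_def by simp
qed

lemma card2: "finite A \<Longrightarrow> a \<in> A \<Longrightarrow> b \<in> A \<Longrightarrow> a \<noteq> b \<Longrightarrow> 2 \<le> card A"
  using card_mono[of A "{a, b}"] by simp

lemma claim1:
  fixes L :: "'a lat" and E :: "('a + nat) lat"
  assumes GLL: "geometric_lattice L" and NT: "nontrivial_lattice L"
    and md: "modular_diagram L (E, \<iota>, J)" and Jne: "J \<noteq> []" and gz: "grading_zero L (E, \<iota>, J)"
  shows "md_basis (E, \<iota>, J) \<in> md_relspan L"
proof -
  interpret L: GL L using GL_I[OF GLL] .
  have me: "modular_extension L E \<iota>" and JA: "set J \<subseteq> atoms E"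
    using md unfolding modular_diagram_def by auto
  note mf = ME_facts[OF GLL me]
  interpret E: GL E by (rule mf(1))
  define F where "F = Fiota L \<iota>"
  define G where "G = joinL E J"
  have FC: "F \<in> fst E" and mF: "modular_flat E F" and imF: "\<iota> ` fst L = fst (Dn E F)"
    using mf unfolding F_def by auto
  have emb: "inj_on \<iota> (fst L)" "\<iota> ` fst L \<subseteq> fst E"
    "\<And>x y. x \<in> fst L \<Longrightarrow> y \<in> fst L \<Longrightarrow> snd L x y \<Longrightarrow> snd E (\<iota> x) (\<iota> y)"
    "\<And>x y. x \<in> fst L \<Longrightarrow> y \<in> fst L \<Longrightarrow> \<iota> (ljoin L x y) = ljoin E (\<iota> x) (\<iota> y)"
    "\<iota> ` atoms L \<subseteq> atoms E"
    using mf(2) unfolding lattice_embedding_def by auto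
  have JC: "set J \<subseteq> fst E" using JA unfolding atoms_def by auto
  have GC: "G \<in> fst E" unfolding G_def using E.joinL_C[OF JC] .
  show ?thesis
  proof (cases "ljoin E F G = ltop E")
    case False
    have "llt E (ljoin E F G) (ltop E)" using False E.le_top FC GC unfolding llt_def by simp
    then have "zero_R3 L (E, \<iota>, J)" unfolding zero_R3_def using md unfolding F_def G_def by simp
    then have "md_basis (E, \<iota>, J) \<in> md_relations L" unfolding md_relations_def by blast
    then show ?thesis unfolding relspan_eq by (rule fm.span_base)
  next
    case FGtop: True
    have FG: "lmeet E G F = lbot E"
    proof -
      have m: "lmeet E G F \<in> fst (Dn E F)" using E.meet_C[OF GC FC] E.meet_lb2[OF GC FC] by (simp add: Dn_def)
      then obtain a where a: "a \<in> fst L" "lmeet E G F = \<iota> a" using imF by auto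
      have "the_inv_into (fst L) \<iota> (lmeet E G F) = lbot L"
        using gz unfolding grading_zero_def F_def G_def by simp
      then have "a = lbot L" using a the_inv_into_f_f[OF emb(1) a(1)] by simp
      then show ?thesis using a ME_bot[OF GLL me] by simp
    qed
    interpret E1: DN E F unfolding DN_def DN_axioms_def using mf(1) FC by blast
    interpret E2: DN E G unfolding DN_def DN_axioms_def using mf(1) GC by blast
    interpret PP: PR "Dn E F" "Dn E G" using PR_I[OF GL_geo[OF E1.GLD] GL_geo[OF E2.GLD]] .
    let ?P = "prod_lattice (Dn E F) (Dn E G)"
    have inP: "(x, y) \<in> fst ?P \<longleftrightarrow> x \<in> fst E \<and> snd E x F \<and> y \<in> fst E \<and> snd E y G" for x y
      unfolding PP.P_C by (simp add: Dn_def)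
    have leP: "snd ?P (x, y) (x', y') \<longleftrightarrow> snd E x x' \<and> snd E y y'" for x y x' y'
      unfolding PP.P_le by (simp add: Dn_def)
    have b1: "lbot (Dn E F) = lbot E" and b2: "lbot (Dn E G) = lbot E" using E1.botD E2.botD by auto
    obtain f :: "('a + nat) \<times> ('a + nat) \<Rightarrow> nat" and n where f: "inj_on f (fst ?P)"
      using finite_imp_inj_to_nat_seg[OF PP.C.fin] by blast
    define h where "h = (\<lambda>p. Inr (f p) :: 'a + nat)"
    have hinj: "inj_on h (fst ?P)" using f unfolding h_def inj_on_def by simp
    define \<psi> where "\<psi> = the_inv_into (fst ?P) h"
    have \<psi>h: "p \<in> fst ?P \<Longrightarrow> \<psi> (h p) = p" for p unfolding \<psi>_def using the_inv_into_f_f[OF hinj] .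
    define E'' where "E'' = (h ` fst ?P, \<lambda>u v. snd ?P (\<psi> u) (\<psi> v))"
    have iso: "lattice_iso ?P E'' h" unfolding lattice_iso_def
    proof (intro conjI ballI)
      show "bij_betw h (fst ?P) (fst E'')" unfolding E''_def using inj_on_imp_bij_betw[OF hinj] by simp
      fix x y assume "x \<in> fst ?P" "y \<in> fst ?P"
      then show "snd ?P x y = snd E'' (h x) (h y)" unfolding E''_def using \<psi>h by simp
    qed
    interpret H: GISO ?P E'' h using GISO_I[OF GL_geo[OF PP.GLP] iso] .
    have GE'': "GL E''" using H.GL2 .
    have CE'': "fst E'' = h ` fst ?P" unfolding E''_def by simp
    define \<iota>'' where "\<iota>'' = (\<lambda>a. h (\<iota> a, lbot E))"
    define \<phi> where "\<phi> = (\<lambda>u. ljoin E (fst (\<psi> u)) (snd (\<psi> u)))"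
    define J'' where "J'' = map (\<lambda>H. h (lbot E, H)) J"
    have \<phi>h: "\<phi> (h (x, y)) = ljoin E x y" if "(x, y) \<in> fst ?P" for x y
      unfolding \<phi>_def using \<psi>h[OF that] by simp
    have \<iota>L: "a \<in> fst L \<Longrightarrow> \<iota> a \<in> fst E \<and> snd E (\<iota> a) F" for a using imF by (auto simp: Dn_def)
    have \<iota>P: "a \<in> fst L \<Longrightarrow> (\<iota> a, lbot E) \<in> fst ?P" for a
      using \<iota>L E.bot_C E.bot_le GC inP by simp
    have FbP: "(F, lbot E) \<in> fst ?P" using inP FC E.refl E.bot_C E.bot_le GC by simp
    have emb'': "lattice_embedding L E'' \<iota>''" unfolding lattice_embedding_def
    proof (intro conjI ballI impI)
      show "inj_on \<iota>'' (fst L)"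
      proof (rule inj_onI)
        fix a b assume ab: "a \<in> fst L" "b \<in> fst L" "\<iota>'' a = \<iota>'' b"
        then have "(\<iota> a, lbot E) = (\<iota> b, lbot E)" using hinj \<iota>P unfolding \<iota>''_def inj_on_def by blast
        then show "a = b" using emb(1) ab unfolding inj_on_def by simp
      qed
      show "\<iota>'' ` fst L \<subseteq> fst E''" using \<iota>P CE'' unfolding \<iota>''_def by auto
      fix x y assume xy: "x \<in> fst L" "y \<in> fst L"
      show "snd L x y \<Longrightarrow> snd E'' (\<iota>'' x) (\<iota>'' y)"
        using H.ord[OF \<iota>P[OF xy(1)] \<iota>P[OF xy(2)]] leP emb(3)[OF xy] E.refl[OF E.bot_C] unfolding \<iota>''_def by simp
      have "ljoin E'' (\<iota>'' x) (\<iota>'' y) = h (ljoin ?P (\<iota> x, lbot E) (\<iota> y, lbot E))"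
        unfolding \<iota>''_def using H.join[OF \<iota>P[OF xy(1)] \<iota>P[OF xy(2)]] by simp
      also have "ljoin ?P (\<iota> x, lbot E) (\<iota> y, lbot E) = (ljoin E (\<iota> x) (\<iota> y), lbot E)"
      proof -
        have m: "\<iota> x \<in> fst (Dn E F)" "\<iota> y \<in> fst (Dn E F)" "lbot E \<in> fst (Dn E G)"
          using \<iota>P[OF xy(1)] \<iota>P[OF xy(2)] by (auto simp: PP.P_C)
        show ?thesis using PP.joinP[OF m(1) m(2) m(3) m(3)] E1.joinD[OF m(1) m(2)] E2.joinD[OF m(3) m(3)]
          E.join_bot_left[OF E.bot_C] by simp
      qed
      finally show "\<iota>'' (ljoin L x y) = ljoin E'' (\<iota>'' x) (\<iota>'' y)" unfolding \<iota>''_def using emb(4)[OF xy] by simp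
    next
      show "\<iota>'' ` atoms L \<subseteq> atoms E''"
      proof
        fix u assume "u \<in> \<iota>'' ` atoms L"
        then obtain a where a: "a \<in> atoms L" "u = h (\<iota> a, lbot E)" unfolding \<iota>''_def by auto
        have aL: "a \<in> fst L" using a unfolding atoms_def by auto
        have "\<iota> a \<in> atoms E" using a emb(5) by auto
        then have "\<iota> a \<in> atoms (Dn E F)" using E1.atomsD \<iota>L[OF aL] E1.memI by auto
        then have "(\<iota> a, lbot E) \<in> atoms ?P" using PP.atom_left b2 by metis
        then show "u \<in> atoms E''" using a H.atoms2 by auto
      qed
    qed
    have modF'': "modular_flat E'' (h (F, lbot E))"
      using H.modular2[OF PP.modular_topbot] E1.topD b2 by simp
    have imF'': "\<iota>'' ` fst L = {x \<in> fst E''. snd E'' (lbot E'') x \<and> snd E'' x (h (F, lbot E))}"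
    proof (intro set_eqI iffI)
      fix u assume "u \<in> \<iota>'' ` fst L"
      then obtain a where a: "a \<in> fst L" "u = h (\<iota> a, lbot E)" unfolding \<iota>''_def by auto
      have uC: "u \<in> fst E''" using a \<iota>P CE'' by auto
      moreover have "snd E'' (lbot E'') u" using H.B.bot_le[OF uC] .
      moreover have "snd E'' u (h (F, lbot E))"
        using H.ord[OF \<iota>P[OF a(1)] FbP] leP \<iota>L[OF a(1)] E.refl[OF E.bot_C] a by simp
      ultimately show "u \<in> {x \<in> fst E''. snd E'' (lbot E'') x \<and> snd E'' x (h (F, lbot E))}" by simp
    next
      fix u assume u: "u \<in> {x \<in> fst E''. snd E'' (lbot E'') x \<and> snd E'' x (h (F, lbot E))}"
      then obtain x y where p: "(x, y) \<in> fst ?P" "u = h (x, y)" using CE'' by auto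
      have "snd ?P (x, y) (F, lbot E)" using H.ord[OF p(1) FbP] u p by simp
      then have "snd E y (lbot E)" using leP by simp
      then have "y = lbot E" using E.antisym[OF _ E.bot_C _ E.bot_le] p(1) inP by auto
      moreover have "x \<in> \<iota> ` fst L" using imF p(1) inP by (auto simp: Dn_def)
      ultimately show "u \<in> \<iota>'' ` fst L" using p unfolding \<iota>''_def by auto
    qed
    have J''A: "set J'' \<subseteq> atoms E''"
    proof
      fix u assume "u \<in> set J''"
      then obtain H where H: "H \<in> set J" "u = h (lbot E, H)" unfolding J''_def by auto
      have "H \<in> atoms E" "H \<in> fst E" using H JA JC by auto
      moreover have "snd E H G" using E.joinL_ub[OF JC H(1)] unfolding G_def .
      ultimately have "H \<in> atoms (Dn E G)" using E2.atomsD E2.memI by auto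
      then have "(lbot E, H) \<in> atoms ?P" using PP.atom_right b1 by metis
      then show "u \<in> atoms E''" using H H.atoms2 by auto
    qed
    have me'': "modular_extension L E'' \<iota>''" unfolding modular_extension_def
      using GL_geo[OF GE''] emb'' modF'' imF'' FbP CE'' by blast
    have md'': "modular_diagram L (E'', \<iota>'', J'')" unfolding modular_diagram_def using me'' J''A by simp
    have Fi'': "Fiota L \<iota>'' = h (F, lbot E)" unfolding Fiota_def \<iota>''_def F_def Fiota_def by simp
    have R4: "zero_R4 L (E'', \<iota>'', J'')"
    proof -
      have nt1: "nontrivial_lattice (Dn E F)"
      proof -
        have "\<iota> (ltop L) \<noteq> \<iota> (lbot L)" using nontriv_top_bot[OF GLL NT] emb(1) L.top_C L.bot_C
          unfolding inj_on_def by blast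
        then have "F \<noteq> lbot E" using ME_bot[OF GLL me] unfolding F_def Fiota_def by simp
        moreover have "F \<in> fst (Dn E F)" "lbot E \<in> fst (Dn E F)" using E1.memI FC E.refl E.bot_C E.bot_le by auto
        ultimately show ?thesis unfolding nontrivial_lattice_def using card2[OF E1.D.fin] by metis
      qed
      have nt2: "nontrivial_lattice (Dn E G)"
      proof -
        obtain H where H: "H \<in> set J" using Jne by (cases J) auto
        have HA: "H \<in> fst E" "rk E H = 1" using H JA unfolding atoms_def by auto
        then have "H \<noteq> lbot E" by auto
        moreover have "H \<in> fst (Dn E G)" using E2.memI HA E.joinL_ub[OF JC H] unfolding G_def by simp
        moreover have "lbot E \<in> fst (Dn E G)" using E2.memI GC E.bot_C E.bot_le by auto
        ultimately show ?thesis unfolding nontrivial_lattice_def using card2[OF E2.D.fin] by metis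
      qed
      have isoE: "lattice_iso E'' ?P \<psi>" unfolding lattice_iso_def
      proof (intro conjI ballI)
        show "bij_betw \<psi> (fst E'') (fst ?P)" unfolding \<psi>_def CE''
          using bij_betw_the_inv_into[OF inj_on_imp_bij_betw[OF hinj]] .
        fix u v show "snd E'' u v = snd ?P (\<psi> u) (\<psi> v)" unfolding E''_def by simp
      qed
      have psF: "\<psi> (Fiota L \<iota>'') \<in> fst (Dn E F) \<times> {lbot (Dn E G)}"
        using Fi'' \<psi>h[OF FbP] b2 FbP by (simp add: PP.P_C)
      have "\<exists>(E1 :: ('a + nat) lat) (E2 :: ('a + nat) lat) \<psi>.
         geometric_lattice E1 \<and> geometric_lattice E2 \<and>
         nontrivial_lattice E1 \<and> nontrivial_lattice E2 \<and>
         lattice_iso E'' (prod_lattice E1 E2) \<psi> \<and>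
         \<psi> (Fiota L \<iota>'') \<in> fst E1 \<times> {lbot E2}"
        apply (rule exI[of _ "Dn E F"], rule exI[of _ "Dn E G"], rule exI[of _ \<psi>])
        using psF nt1 nt2 isoE GL_geo[OF E1.GLD] GL_geo[OF E2.GLD] by (intro conjI)
      then show ?thesis unfolding zero_R4_def using md'' by simp
    qed
    have R2: "rel_R2 L (E'', \<iota>'', J'') (E, \<iota>, J)"
    proof -
      have embphi: "lattice_embedding E'' E \<phi>" unfolding lattice_embedding_def
      proof (intro conjI ballI impI)
        show "inj_on \<phi> (fst E'')"
        proof (rule inj_onI)
          fix u v assume uv: "u \<in> fst E''" "v \<in> fst E''" "\<phi> u = \<phi> v"
          obtain x y x' y' where p: "(x, y) \<in> fst ?P" "u = h (x, y)" "(x', y') \<in> fst ?P" "v = h (x', y')"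
            using uv(1,2) CE'' by auto
          have "ljoin E x y = ljoin E x' y'" using uv(3) \<phi>h p by simp
          then have "x = x' \<and> y = y'" using E.KL_inj[OF FC GC mF FG] p(1,3) inP by auto
          then show "u = v" using p by simp
        qed
        show "\<phi> ` fst E'' \<subseteq> fst E"
        proof
          fix w assume "w \<in> \<phi> ` fst E''"
          then obtain x y where "(x, y) \<in> fst ?P" "w = \<phi> (h (x, y))" using CE'' by auto
          then show "w \<in> fst E" using \<phi>h inP by simp
        qed
        fix u v assume uv: "u \<in> fst E''" "v \<in> fst E''"
        obtain x y x' y' where p: "(x, y) \<in> fst ?P" "u = h (x, y)" "(x', y') \<in> fst ?P" "v = h (x', y')"
          using uv CE'' by auto
        have m: "x \<in> fst E" "y \<in> fst E" "x' \<in> fst E" "y' \<in> fst E" using p inP by auto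
        show "snd E'' u v \<Longrightarrow> snd E (\<phi> u) (\<phi> v)"
        proof -
          assume "snd E'' u v"
          then have "snd E x x'" "snd E y y'" using H.ord[OF p(1) p(3)] p leP by auto
          then show ?thesis using \<phi>h p E.join_mono m by simp
        qed
        have m1: "x \<in> fst (Dn E F)" "x' \<in> fst (Dn E F)" "y \<in> fst (Dn E G)" "y' \<in> fst (Dn E G)"
          using p by (auto simp: PP.P_C)
        have jP: "ljoin ?P (x, y) (x', y') = (ljoin E x x', ljoin E y y')"
          using PP.joinP[OF m1(1,2,3,4)] E1.joinD[OF m1(1,2)] E2.joinD[OF m1(3,4)] by simp
        have jPC: "(ljoin E x x', ljoin E y y') \<in> fst ?P" using jP PP.C.join_C p(1,3) by metis
        have "ljoin E'' u v = h (ljoin E x x', ljoin E y y')" using H.join[OF p(1) p(3)] p jP by simp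
        then have "\<phi> (ljoin E'' u v) = ljoin E (ljoin E x x') (ljoin E y y')" using \<phi>h[OF jPC] by simp
        also have "\<dots> = ljoin E (ljoin E x y) (ljoin E x' y')" using E.join4 m by simp
        finally show "\<phi> (ljoin E'' u v) = ljoin E (\<phi> u) (\<phi> v)" using \<phi>h p by simp
      next
        show "\<phi> ` atoms E'' \<subseteq> atoms E"
        proof
          fix w assume "w \<in> \<phi> ` atoms E''"
          then obtain x y where a: "(x, y) \<in> atoms ?P" "w = \<phi> (h (x, y))" using H.atoms2 by auto
          have aP: "(x, y) \<in> fst ?P" using a(1) unfolding atoms_def by auto
          have w: "w = ljoin E x y" using a \<phi>h[OF aP] by simp
          have xy: "x \<in> fst E" "y \<in> fst E" using aP inP by auto
          from PP.atomsP_cases[OF a(1)] show "w \<in> atoms E"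
          proof
            assume "x \<in> atoms (Dn E F) \<and> y = lbot (Dn E G)"
            then show ?thesis using w b2 E.join_bot_right xy E1.atomsD by auto
          next
            assume "x = lbot (Dn E F) \<and> y \<in> atoms (Dn E G)"
            then show ?thesis using w b1 E.join_bot_left xy E2.atomsD by auto
          qed
        qed
      qed
      have rkeq: "rk E'' (ltop E'') = rk E (ltop E)"
      proof -
        have FGP: "(F, G) \<in> fst ?P" using inP FC GC E.refl by simp
        have "ltop E'' = h (F, G)" using H.top[symmetric] PP.topP E1.topD E2.topD by simp
        then have "rk E'' (ltop E'') = rk ?P (F, G)" using H.rk2[OF FGP] by simp
        also have "\<dots> = rk E F + rk E G" using PP.rkP FGP E1.rkD E2.rkD by (simp add: PP.P_C)
        also have "\<dots> = rk E (ljoin E F G)" using E.KL[OF FC GC mF FG FC E.refl[OF FC] GC E.refl[OF GC]] by simp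
        finally show ?thesis using FGtop by simp
      qed
      have iota: "\<forall>x\<in>fst L. \<iota> x = \<phi> (\<iota>'' x)"
        using \<phi>h \<iota>P \<iota>L E.join_bot_right unfolding \<iota>''_def by simp
      have Jeq: "J = map \<phi> J''"
      proof -
        have "\<forall>H\<in>set J. \<phi> (h (lbot E, H)) = H"
        proof
          fix H assume H: "H \<in> set J"
          then have "H \<in> fst E" "snd E H G" using JC E.joinL_ub[OF JC H] unfolding G_def by auto
          then have "(lbot E, H) \<in> fst ?P" using inP E.bot_C E.bot_le FC by simp
          then show "\<phi> (h (lbot E, H)) = H" using \<phi>h E.join_bot_left \<open>H \<in> fst E\<close> by simp
        qed
        then show ?thesis unfolding J''_def by (induction J) auto
      qed
      show ?thesis unfolding rel_R2_def using md'' md embphi rkeq iota Jeq by blast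
    qed
    have r4: "md_basis (E'', \<iota>'', J'') \<in> md_relations L" using R4 unfolding md_relations_def by blast
    have r2: "md_basis (E'', \<iota>'', J'') - md_basis (E, \<iota>, J) \<in> md_relations L"
      using R2 unfolding md_relations_def by blast
    have "md_basis (E'', \<iota>'', J'') - (md_basis (E'', \<iota>'', J'') - md_basis (E, \<iota>, J)) \<in> fm.span (md_relations L)"
      using fm.span_diff[OF fm.span_base[OF r4] fm.span_base[OF r2]] .
    then show ?thesis unfolding relspan_eq by simp
  qed
qed


definition Ecp :: "'a lat \<Rightarrow> ('a + nat) lat" where
  "Ecp L = (Inl ` fst L, \<lambda>x y. \<exists>a b. x = Inl a \<and> y = Inl b \<and> snd L a b)"

lemma empty_diagram_eq: "empty_diagram L = (Ecp L, Inl, [])"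
  unfolding empty_diagram_def Ecp_def by simp

lemma Ecp_iso: "lattice_iso L (Ecp L) Inl"
  unfolding lattice_iso_def Ecp_def by (auto simp: bij_betw_def)

context GL begin
lemma top_modular: "modular_flat L (ltop L)"
  unfolding modular_flat_def using meet_top_left join_top_left by simp
end

lemma Ecp_facts:
  assumes GLL: "geometric_lattice L"
  shows "GL (Ecp L)" "modular_extension L (Ecp L) Inl" "ltop (Ecp L) = Inl (ltop L)"
    "lbot (Ecp L) = Inl (lbot L)" "x \<in> fst L \<Longrightarrow> rk (Ecp L) (Inl x) = rk L x"
    "atoms (Ecp L) = Inl ` atoms L"
    "x \<in> fst L \<Longrightarrow> y \<in> fst L \<Longrightarrow> ljoin (Ecp L) (Inl x) (Inl y) = Inl (ljoin L x y)"
proof -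
  interpret L: GL L using GL_I[OF GLL] .
  interpret I: GISO L "Ecp L" Inl using GISO_I[OF GLL Ecp_iso] .
  show G: "GL (Ecp L)" using I.GL2 .
  show t: "ltop (Ecp L) = Inl (ltop L)" using I.top by simp
  show b: "lbot (Ecp L) = Inl (lbot L)" using I.bot by simp
  show "x \<in> fst L \<Longrightarrow> rk (Ecp L) (Inl x) = rk L x" using I.rk2 .
  show a: "atoms (Ecp L) = Inl ` atoms L" using I.atoms2 .
  show "x \<in> fst L \<Longrightarrow> y \<in> fst L \<Longrightarrow> ljoin (Ecp L) (Inl x) (Inl y) = Inl (ljoin L x y)" using I.join by simp
  have emb: "lattice_embedding L (Ecp L) Inl" unfolding lattice_embedding_def
    using I.join I.ord I.mapsC a by (auto simp: inj_on_def)
  have mf: "modular_flat (Ecp L) (Inl (ltop L))" using I.modular2[OF L.top_modular] .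
  have im: "Inl ` fst L = {x \<in> fst (Ecp L). snd (Ecp L) (lbot (Ecp L)) x \<and> snd (Ecp L) x (Inl (ltop L))}"
    using I.B.bot_le I.B.le_top t I.img by auto
  show "modular_extension L (Ecp L) Inl" unfolding modular_extension_def
    using GL_geo[OF G] emb mf im I.mapsC[OF L.top_C] by blast
qed

lemma empty_md: "geometric_lattice L \<Longrightarrow> modular_diagram L (empty_diagram L)"
  unfolding empty_diagram_eq modular_diagram_def using Ecp_facts by simp

lemma empty_gz: assumes GLL: "geometric_lattice L" shows "grading_zero L (empty_diagram L)"
proof -
  interpret L: GL L using GL_I[OF GLL] .
  interpret C: GL "Ecp L" using Ecp_facts(1)[OF GLL] .
  have "lmeet (Ecp L) (lbot (Ecp L)) (Inl (ltop L)) = lbot (Ecp L)"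
    using C.meet_bot_left Ecp_facts(3)[OF GLL] C.top_C by metis
  then show ?thesis unfolding grading_zero_def empty_diagram_eq Fiota_def joinL_def
    using Ecp_facts(4)[OF GLL] the_inv_into_f_f[of Inl "fst L" "lbot L"] L.bot_C by simp
qed

lemma empty_deg: assumes GLL: "geometric_lattice L" shows "diagram_degree L (empty_diagram L) = 0"
proof -
  interpret C: GL "Ecp L" using Ecp_facts(1)[OF GLL] .
  have "lmeet (Ecp L) (lbot (Ecp L)) (Inl (ltop L)) = lbot (Ecp L)"
    using C.meet_bot_left Ecp_facts(3)[OF GLL] C.top_C by metis
  then show ?thesis unfolding diagram_degree_def empty_diagram_eq Fiota_def joinL_def by simp
qed

lemma emb_rk:
  assumes GE: "GL E" and GE': "GL E'" and inj: "inj_on \<phi> (fst E)" and im: "\<phi> ` fst E \<subseteq> fst E'"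
    and ord: "\<And>x y. x \<in> fst E \<Longrightarrow> y \<in> fst E \<Longrightarrow> snd E x y \<Longrightarrow> snd E' (\<phi> x) (\<phi> y)"
  shows "x \<in> fst E \<Longrightarrow> rk E x \<le> rk E' (\<phi> x)"
proof (induction "rk E x" arbitrary: x rule: less_induct)
  case less
  interpret E: GL E by (rule GE)
  interpret E': GL E' by (rule GE')
  show ?case
  proof (cases "x = lbot E")
    case True then show ?thesis by simp
  next
    case False
    then have "llt E (lbot E) x" using E.bot_le less.prems unfolding llt_def by simp
    then obtain z where z: "z \<in> fst E" "covers E z x" using E.ex_cover_below[OF E.bot_C less.prems] by blast
    have rz: "rk E x = Suc (rk E z)" using E.rk_cover[OF z(2)] .
    have "llt E z x" using z unfolding covers_def by simp
    then have "llt E' (\<phi> z) (\<phi> x)" using ord[OF z(1) less.prems] inj z(1) less.prems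
      unfolding llt_def inj_on_def by blast
    then have "rk E' (\<phi> z) < rk E' (\<phi> x)" using E'.rk_strict im z(1) less.prems by blast
    moreover have "rk E z \<le> rk E' (\<phi> z)" using less.hyps[of z] rz z(1) by simp
    ultimately show ?thesis using rz by simp
  qed
qed

definition good :: "'a lat \<Rightarrow> 'a diagram \<Rightarrow> bool" where
  "good L D \<longleftrightarrow> snd (snd D) = [] \<and> Fiota L (fst (snd D)) = ltop (fst D)"

lemma R2_good:
  assumes GLL: "geometric_lattice L" and r: "rel_R2 L D D'"
  shows "good L D \<longleftrightarrow> good L D'"
proof -
  interpret L: GL L using GL_I[OF GLL] .
  obtain E \<iota> J E' \<iota>' J' \<phi> where D: "D = (E, \<iota>, J)" "D' = (E', \<iota>', J')"
    and emb: "lattice_embedding E E' \<phi>" and rk: "rk E (ltop E) = rk E' (ltop E')"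
    and io: "\<forall>x\<in>fst L. \<iota>' x = \<phi> (\<iota> x)" and JJ: "J' = map \<phi> J"
    and md: "modular_diagram L D" "modular_diagram L D'"
    using r unfolding rel_R2_def by blast
  have "modular_diagram L (E, \<iota>, J)" "modular_diagram L (E', \<iota>', J')" using md D by auto
  then have me: "modular_extension L E \<iota>" "modular_extension L E' \<iota>'" unfolding modular_diagram_def by auto
  have GE: "GL E" "GL E'" using ME_facts(1)[OF GLL me(1)] ME_facts(1)[OF GLL me(2)] by auto
  interpret E: GL E by (rule GE(1))
  interpret E': GL E' by (rule GE(2))
  have inj: "inj_on \<phi> (fst E)" and im: "\<phi> ` fst E \<subseteq> fst E'"
    and ord: "\<And>x y. x \<in> fst E \<Longrightarrow> y \<in> fst E \<Longrightarrow> snd E x y \<Longrightarrow> snd E' (\<phi> x) (\<phi> y)"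
    using emb unfolding lattice_embedding_def by auto
  have FC: "Fiota L \<iota> \<in> fst E" using ME_facts(3)[OF GLL me(1)] .
  have Fi': "Fiota L \<iota>' = \<phi> (Fiota L \<iota>)" unfolding Fiota_def using io L.top_C by simp
  have ptop: "\<phi> (ltop E) = ltop E'"
  proof -
    have "rk E (ltop E) \<le> rk E' (\<phi> (ltop E))" using emb_rk[OF GE inj im ord E.top_C] .
    moreover have pC: "\<phi> (ltop E) \<in> fst E'" using im E.top_C by blast
    ultimately show ?thesis using E'.rk_eq[OF pC E'.top_C E'.le_top[OF pC]] rk by simp
  qed
  have "Fiota L \<iota> = ltop E \<longleftrightarrow> Fiota L \<iota>' = ltop E'"
  proof
    assume "Fiota L \<iota> = ltop E" then show "Fiota L \<iota>' = ltop E'" using Fi' ptop by simp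
  next
    assume a: "Fiota L \<iota>' = ltop E'"
    show "Fiota L \<iota> = ltop E"
    proof (rule ccontr)
      assume "Fiota L \<iota> \<noteq> ltop E"
      then have "\<phi> (Fiota L \<iota>) \<noteq> \<phi> (ltop E)" using inj FC E.top_C unfolding inj_on_def by blast
      then show False using a Fi' ptop by simp
    qed
  qed
  then show ?thesis unfolding good_def D JJ by simp
qed

lemma R3_notgood: assumes GLL: "geometric_lattice L" and z: "zero_R3 L D" shows "\<not> good L D"
proof
  assume g: "good L D"
  obtain E \<iota> J where D: "D = (E, \<iota>, J)" by (cases D) auto
  have md: "modular_diagram L D" and l: "llt E (ljoin E (Fiota L \<iota>) (joinL E J)) (ltop E)"
    using z D unfolding zero_R3_def by auto
  have me: "modular_extension L E \<iota>" using md D unfolding modular_diagram_def by auto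
  interpret E: GL E using ME_facts(1)[OF GLL me] .
  have "J = []" "Fiota L \<iota> = ltop E" using g D unfolding good_def by auto
  then have "ljoin E (Fiota L \<iota>) (joinL E J) = ltop E" using E.join_top_left E.bot_C by (simp add: joinL_def)
  then show False using l unfolding llt_def by simp
qed

lemma R5_notgood: assumes z: "zero_R5 L D" shows "\<not> good L D"
proof
  assume g: "good L D"
  obtain E \<iota> J where D: "D = (E, \<iota>, J)" by (cases D) auto
  have "J = []" using g D unfolding good_def by auto
  then show False using z D unfolding zero_R5_def by simp
qed

lemma R4_notgood: assumes GLL: "geometric_lattice L" and z: "zero_R4 L D" shows "\<not> good L D"
proof
  assume g: "good L D"
  obtain E \<iota> J where D: "D = (E, \<iota>, J)" by (cases D) auto
  have md: "modular_diagram L D" using z unfolding zero_R4_def by auto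
  obtain E1 E2 :: "('a + nat) lat" and \<psi> where z': "geometric_lattice E1" "geometric_lattice E2"
    "nontrivial_lattice E2" "lattice_iso E (prod_lattice E1 E2) \<psi>" "\<psi> (Fiota L \<iota>) \<in> fst E1 \<times> {lbot E2}"
    using z D unfolding zero_R4_def by auto
  have me: "modular_extension L E \<iota>" using md D unfolding modular_diagram_def by auto
  interpret E: GL E using ME_facts(1)[OF GLL me] .
  interpret A: GL E1 using GL_I[OF z'(1)] .
  interpret B: GL E2 using GL_I[OF z'(2)] .
  have Ft: "Fiota L \<iota> = ltop E" using g D unfolding good_def by auto
  obtain a where a: "\<psi> (ltop E) = (a, lbot E2)" using z'(5) Ft by auto
  have bij: "bij_betw \<psi> (fst E) (fst E1 \<times> fst E2)" and
    ordI: "\<And>x y. x \<in> fst E \<Longrightarrow> y \<in> fst E \<Longrightarrow> snd E x y \<longleftrightarrow> snd (prod_lattice E1 E2) (\<psi> x) (\<psi> y)"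
    using z'(4) unfolding lattice_iso_def prod_lattice_def by auto
  obtain x1 where x1: "x1 \<in> fst E1" using A.ne by blast
  have "fst E2 \<subseteq> {lbot E2}"
  proof
    fix y assume y: "y \<in> fst E2"
    then have "(x1, y) \<in> \<psi> ` fst E" using bij x1 unfolding bij_betw_def by auto
    then obtain w where w: "w \<in> fst E" "\<psi> w = (x1, y)" by auto
    have "snd (prod_lattice E1 E2) (\<psi> w) (\<psi> (ltop E))" using ordI[OF w(1) E.top_C] E.le_top[OF w(1)] by simp
    then have "snd E2 y (lbot E2)" using w(2) a by (simp add: prod_lattice_def)
    then have "y = lbot E2" using B.antisym[OF y B.bot_C] B.bot_le[OF y] by simp
    then show "y \<in> {lbot E2}" by simp
  qed
  then have "card (fst E2) \<le> 1" using card_mono[of "{lbot E2}" "fst E2"] by simp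
  then show False using z'(3) unfolding nontrivial_lattice_def by simp
qed

lemma R1_notgood: "rel_R1 L D D' \<Longrightarrow> \<not> good L D \<and> \<not> good L D'"
  unfolding rel_R1_def good_def by auto

definition supp_good :: "'a lat \<Rightarrow> ('a diagram \<Rightarrow> rat) \<Rightarrow> 'a diagram set" where
  "supp_good L f = {X. good L X \<and> f X \<noteq> 0}"

definition Lam :: "'a lat \<Rightarrow> ('a diagram \<Rightarrow> rat) \<Rightarrow> rat" where
  "Lam L f = (\<Sum>X\<in>supp_good L f. f X)"

definition SS :: "'a lat \<Rightarrow> ('a diagram \<Rightarrow> rat) set" where
  "SS L = {f. finite (supp_good L f) \<and> Lam L f = 0}"

lemma Lam_U: assumes "finite U" "supp_good L f \<subseteq> U"
  shows "Lam L f = (\<Sum>X\<in>{X\<in>U. good L X}. f X)"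
  unfolding Lam_def
proof (rule sum.mono_neutral_left)
  show "finite {X \<in> U. good L X}" using assms(1) by simp
  show "supp_good L f \<subseteq> {X \<in> U. good L X}" using assms(2) unfolding supp_good_def by auto
  show "\<forall>i\<in>{X \<in> U. good L X} - supp_good L f. f i = 0" unfolding supp_good_def by auto
qed

lemma SS_subspace: "fm.subspace (SS L)"
  unfolding fm.subspace_def
proof (intro conjI ballI allI)
  show "0 \<in> SS L" unfolding SS_def Lam_def supp_good_def by simp
  fix f g assume f: "f \<in> SS L" and g: "g \<in> SS L"
  let ?U = "supp_good L f \<union> supp_good L g"
  have fU: "finite ?U" using f g unfolding SS_def by auto
  have s: "supp_good L (f + g) \<subseteq> ?U" unfolding supp_good_def by auto
  have "Lam L (f + g) = (\<Sum>X\<in>{X\<in>?U. good L X}. f X + g X)" using Lam_U[OF fU s] by simp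
  also have "\<dots> = (\<Sum>X\<in>{X\<in>?U. good L X}. f X) + (\<Sum>X\<in>{X\<in>?U. good L X}. g X)" by (rule sum.distrib)
  also have "\<dots> = Lam L f + Lam L g" using Lam_U[OF fU, where f=f] Lam_U[OF fU, where f=g] by auto
  finally show "f + g \<in> SS L" using f g fU s finite_subset unfolding SS_def by auto
next
  fix c :: rat and f assume f: "f \<in> SS L"
  let ?U = "supp_good L f"
  have fU: "finite ?U" using f unfolding SS_def by auto
  have s: "supp_good L (\<lambda>X. c * f X) \<subseteq> ?U" unfolding supp_good_def by auto
  have "Lam L (\<lambda>X. c * f X) = (\<Sum>X\<in>{X\<in>?U. good L X}. c * f X)" using Lam_U[OF fU s] by simp
  also have "\<dots> = c * (\<Sum>X\<in>{X\<in>?U. good L X}. f X)" by (simp add: sum_distrib_left)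
  also have "\<dots> = c * Lam L f" using Lam_U[OF fU, where f=f] by auto
  finally show "(\<lambda>X. c * f X) \<in> SS L" using f fU s finite_subset unfolding SS_def by auto
qed

lemma basis_supp: "supp_good L (md_basis D) \<subseteq> {D}" unfolding supp_good_def md_basis_def by auto

lemma basis_notgood: "\<not> good L D \<Longrightarrow> md_basis D \<in> SS L"
proof -
  assume ng: "\<not> good L D"
  have "supp_good L (md_basis D) = {}" using basis_supp[of L D] ng unfolding supp_good_def by auto
  then show ?thesis unfolding SS_def Lam_def by simp
qed

lemma relations_SS: assumes GLL: "geometric_lattice L" shows "md_relations L \<subseteq> SS L"
proof
  fix f assume "f \<in> md_relations L"
  then consider (r1) D D' where "f = md_basis D + md_basis D'" "rel_R1 L D D'"
    | (r2) D D' where "f = md_basis D - md_basis D'" "rel_R2 L D D'"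
    | (r0) D where "f = md_basis D" "zero_R3 L D \<or> zero_R4 L D \<or> zero_R5 L D"
    unfolding md_relations_def by blast
  then show "f \<in> SS L"
  proof cases
    case r0
    then have "\<not> good L D" using R3_notgood[OF GLL] R4_notgood[OF GLL] R5_notgood by blast
    then show ?thesis using r0 basis_notgood by simp
  next
    case r1
    have U: "finite {D, D'}" "supp_good L f \<subseteq> {D, D'}" using r1 unfolding supp_good_def md_basis_def by auto
    have e: "{X \<in> {D, D'}. good L X} = {}" using R1_notgood[OF r1(2)] by auto
    show ?thesis using Lam_U[OF U, unfolded e] finite_subset[OF U(2) U(1)] unfolding SS_def by simp
  next
    case r2
    have U: "finite {D, D'}" "supp_good L f \<subseteq> {D, D'}" using r2 unfolding supp_good_def md_basis_def by auto
    have gg: "good L D \<longleftrightarrow> good L D'" using R2_good[OF GLL r2(2)] .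
    have "Lam L f = 0"
    proof (cases "good L D")
      case False
      then have e: "{X \<in> {D, D'}. good L X} = {}" using gg by auto
      show ?thesis using Lam_U[OF U, unfolded e] by simp
    next
      case True
      then have e: "{X \<in> {D, D'}. good L X} = {D, D'}" using gg by auto
      show ?thesis
      proof (cases "D = D'")
        case True then show ?thesis using Lam_U[OF U, unfolded e] r2(1) by simp
      next
        case False then show ?thesis using Lam_U[OF U, unfolded e] r2(1) by (simp add: md_basis_def)
      qed
    qed
    then show ?thesis using finite_subset[OF U(2) U(1)] unfolding SS_def by simp
  qed
qed

lemma empty_notin: assumes GLL: "geometric_lattice L" shows "md_basis (empty_diagram L) \<notin> md_relspan L"
proof
  assume "md_basis (empty_diagram L) \<in> md_relspan L"
  then have "md_basis (empty_diagram L) \<in> SS L"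
    using fm.span_minimal[OF relations_SS[OF GLL] SS_subspace] unfolding relspan_eq by blast
  moreover have "good L (empty_diagram L)" unfolding good_def empty_diagram_eq Fiota_def
    using Ecp_facts(3)[OF GLL] by simp
  ultimately have "Lam L (md_basis (empty_diagram L)) = 0" "supp_good L (md_basis (empty_diagram L)) = {empty_diagram L}"
    unfolding SS_def supp_good_def md_basis_def by auto
  then show False unfolding Lam_def md_basis_def by simp
qed


lemma claim6:
  fixes L :: "'a lat"
  assumes GLL: "geometric_lattice L" and NT: "nontrivial_lattice L"
    and md: "modular_diagram L D" and gz: "grading_zero L D"
  shows "\<exists>c::rat. (\<lambda>X. md_basis D X - c * md_basis (empty_diagram L) X) \<in> md_relspan L"
proof -
  interpret L: GL L using GL_I[OF GLL] .
  obtain E \<iota> J where D: "D = (E, \<iota>, J)" by (cases D) auto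
  have md': "modular_diagram L (E, \<iota>, J)" using md D by simp
  have me: "modular_extension L E \<iota>" using md' unfolding modular_diagram_def by simp
  interpret E: GL E using ME_facts(1)[OF GLL me] .
  have FC: "Fiota L \<iota> \<in> fst E" using ME_facts(3)[OF GLL me] .
  show ?thesis
  proof (cases "J = []")
    case False
    then have "md_basis D \<in> md_relspan L" using claim1[OF GLL NT md'] gz D by simp
    then show ?thesis by (intro exI[of _ 0]) simp
  next
    case Jn: True
    show ?thesis
    proof (cases "Fiota L \<iota> = ltop E")
      case False
      then have "llt E (Fiota L \<iota>) (ltop E)" using E.le_top[OF FC] unfolding llt_def by simp
      then have "zero_R3 L D" unfolding zero_R3_def using md' D Jn E.join_bot_right[OF FC]
        by (simp add: joinL_def)
      then have "md_basis D \<in> md_relations L" unfolding md_relations_def by blast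
      then have "md_basis D \<in> md_relspan L" unfolding relspan_eq by (rule fm.span_base)
      then show ?thesis by (intro exI[of _ 0]) simp
    next
      case Ftop: True
      define \<phi> where "\<phi> = (\<lambda>u::'a + nat. \<iota> (projl u))"
      have emb: "inj_on \<iota> (fst L)" "\<iota> ` fst L \<subseteq> fst E"
        "\<And>x y. x \<in> fst L \<Longrightarrow> y \<in> fst L \<Longrightarrow> snd L x y \<Longrightarrow> snd E (\<iota> x) (\<iota> y)"
        "\<And>x y. x \<in> fst L \<Longrightarrow> y \<in> fst L \<Longrightarrow> \<iota> (ljoin L x y) = ljoin E (\<iota> x) (\<iota> y)"
        "\<iota> ` atoms L \<subseteq> atoms E"
        using ME_facts(2)[OF GLL me] unfolding lattice_embedding_def by auto
      have CE: "fst (Ecp L) = Inl ` fst L" unfolding Ecp_def by simp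
      have embphi: "lattice_embedding (Ecp L) E \<phi>" unfolding lattice_embedding_def
      proof (intro conjI ballI impI)
        show "inj_on \<phi> (fst (Ecp L))" using emb(1) unfolding CE \<phi>_def inj_on_def by auto
        show "\<phi> ` fst (Ecp L) \<subseteq> fst E" using emb(2) unfolding CE \<phi>_def by auto
        fix u v assume uv: "u \<in> fst (Ecp L)" "v \<in> fst (Ecp L)"
        then obtain a b where ab: "a \<in> fst L" "b \<in> fst L" "u = Inl a" "v = Inl b" unfolding CE by auto
        show "snd (Ecp L) u v \<Longrightarrow> snd E (\<phi> u) (\<phi> v)" using emb(3) ab unfolding Ecp_def \<phi>_def by auto
        show "\<phi> (ljoin (Ecp L) u v) = ljoin E (\<phi> u) (\<phi> v)"
          using Ecp_facts(7)[OF GLL ab(1,2)] emb(4)[OF ab(1,2)] ab unfolding \<phi>_def by simp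
      next
        show "\<phi> ` atoms (Ecp L) \<subseteq> atoms E" using Ecp_facts(6)[OF GLL] emb(5) unfolding \<phi>_def by auto
      qed
      have rkeq: "rk (Ecp L) (ltop (Ecp L)) = rk E (ltop E)"
        using Ecp_facts(3)[OF GLL] Ecp_facts(5)[OF GLL L.top_C] ME_rk[OF GLL me L.top_C] Ftop
        unfolding Fiota_def by simp
      have "rel_R2 L (empty_diagram L) D" unfolding rel_R2_def
      proof (intro conjI)
        show "modular_diagram L (empty_diagram L)" using empty_md[OF GLL] .
        show "modular_diagram L D" using md .
        show "\<exists>E \<iota> J E' \<iota>' J' \<phi>. empty_diagram L = (E, \<iota>, J) \<and> D = (E', \<iota>', J') \<and>
          lattice_embedding E E' \<phi> \<and> rk E (ltop E) = rk E' (ltop E') \<and>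
          (\<forall>x\<in>fst L. \<iota>' x = \<phi> (\<iota> x)) \<and> J' = map \<phi> J"
          apply (rule exI[of _ "Ecp L"], rule exI[of _ Inl], rule exI[of _ "[]"])
          apply (rule exI[of _ E], rule exI[of _ \<iota>], rule exI[of _ J], rule exI[of _ \<phi>])
          using empty_diagram_eq D embphi rkeq Jn unfolding \<phi>_def by simp
      qed
      then have "md_basis (empty_diagram L) - md_basis D \<in> md_relations L"
        unfolding md_relations_def by blast
      then have "- (md_basis (empty_diagram L) - md_basis D) \<in> md_relspan L"
        unfolding relspan_eq by (intro fm.span_neg fm.span_base)
      moreover have "- (md_basis (empty_diagram L) - md_basis D) =
          (\<lambda>X. md_basis D X - 1 * md_basis (empty_diagram L) X)" by (simp add: fun_eq_iff)
      ultimately show ?thesis by (intro exI[of _ 1]) simp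
    qed
  qed
qed

lemma claim7:
  fixes L :: "'a lat"
  assumes GLL: "geometric_lattice L" and NT: "nontrivial_lattice L"
    and md: "modular_diagram L D" and gz: "grading_zero L D" and deg: "diagram_degree L D \<noteq> 0"
  shows "md_basis D \<in> md_relspan L"
proof -
  obtain E \<iota> J where D: "D = (E, \<iota>, J)" by (cases D) auto
  have md': "modular_diagram L (E, \<iota>, J)" using md D by simp
  have me: "modular_extension L E \<iota>" using md' unfolding modular_diagram_def by simp
  interpret E: GL E using ME_facts(1)[OF GLL me] .
  have FC: "Fiota L \<iota> \<in> fst E" using ME_facts(3)[OF GLL me] .
  have "J \<noteq> []"
  proof
    assume "J = []"
    then have "diagram_degree L D = 0" unfolding D diagram_degree_def
      using E.meet_bot_left[OF FC] by (simp add: joinL_def)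
    then show False using deg by simp
  qed
  then show ?thesis using claim1[OF GLL NT md'] gz D by simp
qed

theorem mainTheorem11:
  fixes L :: "'a lat"
  assumes "geometric_lattice L" and "nontrivial_lattice L"
  shows "(\<forall>D. modular_diagram L D \<and> snd (snd D) \<noteq> [] \<and> grading_zero L D
              \<longrightarrow> md_basis D \<in> md_relspan L)
    \<and> modular_diagram L (empty_diagram L) \<and> grading_zero L (empty_diagram L)
    \<and> diagram_degree L (empty_diagram L) = 0
    \<and> md_basis (empty_diagram L) \<notin> md_relspan L
    \<and> (\<forall>D. modular_diagram L D \<and> grading_zero L D
              \<longrightarrow> (\<exists>c::rat. (\<lambda>X. md_basis D X - c * md_basis (empty_diagram L) X) \<in> md_relspan L))
    \<and> (\<forall>D. modular_diagram L D \<and> grading_zero L D \<and> diagram_degree L D \<noteq> 0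
              \<longrightarrow> md_basis D \<in> md_relspan L)"
proof (intro conjI allI impI)
  fix D assume a: "modular_diagram L D \<and> snd (snd D) \<noteq> [] \<and> grading_zero L D"
  obtain E \<iota> J where D: "D = (E, \<iota>, J)" by (cases D) auto
  show "md_basis D \<in> md_relspan L" using claim1[OF assms, of E \<iota> J] a D by simp
next
  show "modular_diagram L (empty_diagram L)" using empty_md[OF assms(1)] .
  show "grading_zero L (empty_diagram L)" using empty_gz[OF assms(1)] .
  show "diagram_degree L (empty_diagram L) = 0" using empty_deg[OF assms(1)] .
  show "md_basis (empty_diagram L) \<notin> md_relspan L" using empty_notin[OF assms(1)] .
next
  fix D assume "modular_diagram L D \<and> grading_zero L D"
  then show "\<exists>c::rat. (\<lambda>X. md_basis D X - c * md_basis (empty_diagram L) X) \<in> md_relspan L"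
    using claim6[OF assms] by blast
next
  fix D assume "modular_diagram L D \<and> grading_zero L D \<and> diagram_degree L D \<noteq> 0"
  then show "md_basis D \<in> md_relspan L" using claim7[OF assms] by blast
qed


end
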